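(* Let $\varphi$ be an AND-OR formula with $n$ leaves in which every gate has fan-in two, let $r$ be its root, fix arbitrary $s_1(v),s_2(v)>0$ for every internal vertex $v$, and let $P_\varphi$ be the span program obtained from the gate span programs $P_v$ by reduced tensor-product composition from the root toward the leaves (in an otherwise arbitrary order). Let $U$ be the set of maximal false inputs to $\varphi$. Then, identifying the standard basis of the inner product space of $P_\varphi$ with $U$ (so the space is $\mathbb{C}^U$), $P_\varphi$ is given as follows. Its target vector is $$\lvert t\rangle=\sum_{x\in U}\Bigl(\prod_{v\in T_x}\begin{Bmatrix}\alpha_{j(x,v)}(v)\\ \delta(v)\end{Bmatrix}\cdot\prod_{v\notin T_x}\begin{Bmatrix}\alpha(v)\\ \delta(v)\end{Bmatrix}\Bigr)\lvert x\rangle .$$ Its input vectors are indexed by $I_{k,1}=\{k\}$, $I_{k,0}=\emptyset$ for $k\in[n]$, with $$\lvert v_k\rangle=\sum_{x\in U:\,x_k=0}\Bigl(\prod_{v\in\gamma_k}\begin{Bmatrix}\beta_{j(k,v)}(v)\\ \epsilon_{j(k,v)}(v)\end{Bmatrix}\cdot\prod_{v\in T_x\setminus\gamma_k}\begin{Bmatrix}\alpha_{j(x,v)}(v)\\ \delta(v)\end{Bmatrix}\cdot\prod_{v\notin T_x}\begin{Bmatrix}\alpha(v)\\ \delta(v)\end{Bmatrix}\Bigr)\lvert x\rangle .$$ In each brace the top entry is taken if $v$ is an AND gate and the bottom entry if $v$ is an OR gate, and all products range over internal vertices $v$ of $\varphi$ only. In particular, for $x\in U$, $\langle x\vert v_k\rangle=0$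 if and only if $x_k=1$, and thus $\lvert x\rangle/\langle t\vert x\rangle$ is a witness for $f_{P_\varphi}(x)=0$.
   Context: An AND-OR formula is a rooted tree with internal vertices labeled AND or OR, leaves numbered $1,\dots,n$, defining $\varphi:\{0,1\}^n\to\{0,1\}$ by placing $x_k$ on leaf $k$ and evaluating toward the root. Here each internal vertex $v$ has exactly two ordered children (child 1 and child 2). A strict, monotone span program on $N$ bits consists of an inner product space $V$ over $\mathbb{C}$ with a fixed orthonormal basis, a target $\lvert t\rangle\in V$, disjoint finite index sets $I_{k,1}$ ($k\in[N]$) and input vectors $\lvert v_i\rangle$; it computes $f_P(x)=1$ iff $\lvert t\rangle\in\mathrm{Span}\{\lvert v_i\rangle:i\in I_{k,1},x_k=1\}$. A witness for $f_P(x)=0$ is a vector $\lvert w'\rangle\in V$ with $\langle t\vert w'\rangle=1$ and $\langle v_i\vert w'\rangle=0$ for all $i\in I_{k,1}$ with $x_k=1$. Gate span programs: for an internal vertex $v$, $P_v=P_{\mathrm{AND}}(s_1(v),s_2(v))$ if $v$ is an AND gate: space $\mathbb{C}^2$, target $(\alpha_1(v),\alpha_2(v))^T$, input vectors $(\beta_1(v),0)^T$ for input 1 and $(0,\beta_2(v))^T$ for input 2; and $P_v=P_{\mathrm{OR}}(s_1(v),s_2(v))$ if $v$ is an OR gate: space $\mathbb{C}$, target $\delta(v)$, input vectors $\epsilon_1(v)$, $\epsilon_2(v)$. Here $\alpha_j(v)=\epsilon_j(v)=(s_j(v)/(s_1(v)+s_2(v)))^{1/4}$, $\beta_j(v)=1$,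 $\delta(v)=1$, $\alpha(v)=\sqrt{\alpha_1(v)^2+\alpha_2(v)^2}$. Each has $I_{1,1}=\{1\}$, $I_{2,1}=\{2\}$. Reduced tensor-product composition of a strict monotone program $P'$ (space $V'$ with basis, target $\lvert t'\rangle$, inputs $\lvert v'_{i'}\rangle$, $i'\in I'_{k,1}$, $k\in[m]$) into input $j$ of a strict monotone program $P$ with space $\mathbb{C}^{[d]}$: let $Z=\{l\in[d]:\langle l\vert v_i\rangle=0\ \forall i\in I_{j,1}\}$; set $V_l=V'$, $\lvert\pi_l\rangle=\lvert t'\rangle$ for $l\notin Z$ and $V_l=\mathbb{C}$, $\lvert\pi_l\rangle=\lVert\lvert t'\rangle\rVert$ for $l\in Z$. The result has space $\bigoplus_l V_l$ (with the union of the bases), target $\sum_l\langle l\vert t\rangle\lvert\pi_l\rangle_{V_l}$; input $j$ of $P$ is replaced by the $m$ inputs of $P'$, with index sets $I_{j,1}\times I'_{k,1}$ and vectors $\sum_l\langle l\vert v_i\rangle\lvert v'_{i'}\rangle_{V_l}$; every other input $j'$ of $P$ keeps index set $I_{j',1}$ with vectors $\sum_l\langle l\vert v_\iota\rangle\lvert\pi_l\rangle_{V_l}$. The construction of $P_\varphi$ starts from $P_r$ and repeatedly composes $P_v$ into the input of the current span program corresponding to $v$ (whose parent has already been composed), until all inputs correspond to leaves of $\varphi$. An input $x\in\{0,1\}^n$ is a maximal false input if $\varphi(x)=0$ and flipping any bit of $x$ from $0$ to $1$ makes $\varphi$ evaluate to $1$. For such $x$, $T_x$ is the subtree of $\varphi$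 rooted at $r$ whose leaves are exactly the leaves $k$ with $x_k=0$; for each vertex $v\in T_x$, if $v$ is OR both its children are in $T_x$, and if $v$ is AND exactly one child is in $T_x$, indexed $j(x,v)\in[2]$. $\gamma_k$ is the simple path from leaf $k$ to $r$, and $j(k,v)\in[2]$ is the child of $v$ lying on $\gamma_k$. *)

theory Defs
  imports Complex_Main
begin

datatype gt = AND | OR

(* Leaf k carries the leaf number k; Gate g c1 c2 has ordered children c1 (child 1), c2 (child 2) *)
datatype form = Leaf nat | Gate gt form form

fun leaves :: "form \<Rightarrow> nat list" where
  "leaves (Leaf k) = [k]"
| "leaves (Gate g a b) = leaves a @ leaves b"

fun evalf :: "form \<Rightarrow> (nat \<Rightarrow> bool) \<Rightarrow> bool" where
  "evalf (Leaf k) x = x k"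
| "evalf (Gate AND a b) x = (evalf a x \<and> evalf b x)"
| "evalf (Gate OR a b) x = (evalf a x \<or> evalf b x)"

text \<open>Vertices are addressed by positions: the list of child indices (1 or 2) on the
  path from the root r (position []).\<close>
fun sub :: "form \<Rightarrow> nat list \<Rightarrow> form option" where
  "sub t [] = Some t"
| "sub (Leaf k) (i # p) = None"
| "sub (Gate g a b) (i # p) = (if i = 1 then sub a p else if i = 2 then sub b p else None)"

definition gates :: "form \<Rightarrow> nat list set" where
  "gates \<phi> = {p. \<exists>g a b. sub \<phi> p = Some (Gate g a b)}"

definition isAND :: "form \<Rightarrow> nat list \<Rightarrow> bool" where
  "isAND \<phi> p = (\<exists>a b. sub \<phi> p = Some (Gate AND a b))"

definition leafposs :: "form \<Rightarrow> nat list set" where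
  "leafposs \<phi> = {p. \<exists>k. sub \<phi> p = Some (Leaf k)}"

definition leafpos :: "form \<Rightarrow> nat \<Rightarrow> nat list" where
  "leafpos \<phi> k = (THE p. sub \<phi> p = Some (Leaf k))"

definition leaflabel :: "form \<Rightarrow> nat list \<Rightarrow> nat" where
  "leaflabel \<phi> p = (case sub \<phi> p of Some (Leaf k) \<Rightarrow> k | _ \<Rightarrow> 0)"

text \<open>Inputs x in {0,1}^n are functions nat => bool vanishing outside [n]; True = 1.\<close>
definition maxfalse :: "form \<Rightarrow> nat \<Rightarrow> (nat \<Rightarrow> bool) \<Rightarrow> bool" where
  "maxfalse \<phi> n x \<longleftrightarrow> (\<forall>k. x k \<longrightarrow> k \<in> {1..n}) \<and> \<not> evalf \<phi> x \<and>
      (\<forall>k\<in>{1..n}. \<not> x k \<longrightarrow> evalf \<phi> (x(k := True)))"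

definition Uset :: "form \<Rightarrow> nat \<Rightarrow> (nat \<Rightarrow> bool) set" where
  "Uset \<phi> n = {x. maxfalse \<phi> n x}"

definition Tx_ok :: "form \<Rightarrow> (nat \<Rightarrow> bool) \<Rightarrow> nat list set \<Rightarrow> bool" where
  "Tx_ok \<phi> x S \<longleftrightarrow> S \<subseteq> {p. sub \<phi> p \<noteq> None} \<and> [] \<in> S \<and>
     (\<forall>p i. p @ [i] \<in> S \<longrightarrow> p \<in> S) \<and>
     (\<forall>p k. sub \<phi> p = Some (Leaf k) \<longrightarrow> (p \<in> S \<longleftrightarrow> \<not> x k)) \<and>
     (\<forall>p\<in>S. \<forall>a b. sub \<phi> p = Some (Gate OR a b) \<longrightarrow> p @ [1] \<in> S \<and> p @ [2] \<in> S) \<and>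
     (\<forall>p\<in>S. \<forall>a b. sub \<phi> p = Some (Gate AND a b) \<longrightarrow> (p @ [1] \<in> S) \<noteq> (p @ [2] \<in> S))"

definition Tx :: "form \<Rightarrow> (nat \<Rightarrow> bool) \<Rightarrow> nat list set" where
  "Tx \<phi> x = (THE S. Tx_ok \<phi> x S)"

definition jx :: "form \<Rightarrow> (nat \<Rightarrow> bool) \<Rightarrow> nat list \<Rightarrow> nat" where
  "jx \<phi> x v = (THE j. j \<in> {1, 2} \<and> v @ [j] \<in> Tx \<phi> x)"

definition gamma :: "form \<Rightarrow> nat \<Rightarrow> nat list set" where
  "gamma \<phi> k = {v \<in> gates \<phi>. \<exists>q. leafpos \<phi> k = v @ q}"

definition jk :: "form \<Rightarrow> nat \<Rightarrow> nat list \<Rightarrow> nat" where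
  "jk \<phi> k v = leafpos \<phi> k ! length v"

type_synonym weights = "nat list \<Rightarrow> nat \<Rightarrow> real"  (* s v j = s_j(v) *)

definition alpha :: "weights \<Rightarrow> nat list \<Rightarrow> nat \<Rightarrow> real" where
  "alpha s v j = (s v j / (s v 1 + s v 2)) powr (1/4)"

definition eps :: "weights \<Rightarrow> nat list \<Rightarrow> nat \<Rightarrow> real" where
  "eps s v j = (s v j / (s v 1 + s v 2)) powr (1/4)"

definition beta :: "nat list \<Rightarrow> nat \<Rightarrow> real" where
  "beta v j = 1"

definition delta :: "nat list \<Rightarrow> real" where
  "delta v = 1"

definition alphatot :: "weights \<Rightarrow> nat list \<Rightarrow> real" where
  "alphatot s v = sqrt ((alpha s v 1)\<^sup>2 + (alpha s v 2)\<^sup>2)"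

text \<open>Labels for basis elements and input-vector indices; Pr l b is the basis vector b of
  the copy V_l, Zl l the one-dimensional V_l for l in Z.\<close>
datatype lab = L nat | Pr lab lab | Zl lab

text \<open>A strict monotone span program: orthonormal basis sp_basis, vectors as coordinate
  functions, inputs named by positions of the formula, I_{p,1} = sp_idx p.\<close>
record sprog =
  sp_basis :: "lab set"
  sp_target :: "lab \<Rightarrow> complex"
  sp_inputs :: "nat list set"
  sp_idx :: "nat list \<Rightarrow> lab set"
  sp_vec :: "lab \<Rightarrow> lab \<Rightarrow> complex"

definition ip :: "sprog \<Rightarrow> (lab \<Rightarrow> complex) \<Rightarrow> (lab \<Rightarrow> complex) \<Rightarrow> complex" where
  "ip P u w = (\<Sum>b\<in>sp_basis P. cnj (u b) * w b)"

definition nrm :: "sprog \<Rightarrow> (lab \<Rightarrow> complex) \<Rightarrow> real" where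
  "nrm P u = sqrt (\<Sum>b\<in>sp_basis P. (cmod (u b))\<^sup>2)"

definition witness :: "sprog \<Rightarrow> (nat list \<Rightarrow> bool) \<Rightarrow> (lab \<Rightarrow> complex) \<Rightarrow> bool" where
  "witness P y w \<longleftrightarrow> ip P (sp_target P) w = 1 \<and>
     (\<forall>p\<in>sp_inputs P. y p \<longrightarrow> (\<forall>i\<in>sp_idx P p. ip P (sp_vec P i) w = 0))"

text \<open>Gate span program P_v for the internal vertex at position p; its inputs 1,2 are
  named by the child positions p@[1], p@[2].\<close>
definition gateprog :: "form \<Rightarrow> weights \<Rightarrow> nat list \<Rightarrow> sprog" where
  "gateprog \<phi> s p =
    (if isAND \<phi> p then
       \<lparr> sp_basis = {L 1, L 2},
         sp_target = (\<lambda>b. if b = L 1 then complex_of_real (alpha s p 1)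
                          else if b = L 2 then complex_of_real (alpha s p 2) else 0),
         sp_inputs = {p @ [1], p @ [2]},
         sp_idx = (\<lambda>q. if q = p @ [1] then {L 1} else if q = p @ [2] then {L 2} else {}),
         sp_vec = (\<lambda>i b. if i = L 1 \<and> b = L 1 then complex_of_real (beta p 1)
                         else if i = L 2 \<and> b = L 2 then complex_of_real (beta p 2) else 0) \<rparr>
     else
       \<lparr> sp_basis = {L 1},
         sp_target = (\<lambda>b. if b = L 1 then complex_of_real (delta p) else 0),
         sp_inputs = {p @ [1], p @ [2]},
         sp_idx = (\<lambda>q. if q = p @ [1] then {L 1} else if q = p @ [2] then {L 2} else {}),
         sp_vec = (\<lambda>i b. if b = L 1 then
                            (if i = L 1 then complex_of_real (eps s p 1)
                             else if i = L 2 then complex_of_real (eps s p 2) else 0)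
                          else 0) \<rparr>)"

text \<open>Reduced tensor-product composition of Q (= P') into input j of P.\<close>
definition compose :: "sprog \<Rightarrow> nat list \<Rightarrow> sprog \<Rightarrow> sprog" where
  "compose Q j P =
    (let Z = {l \<in> sp_basis P. \<forall>i\<in>sp_idx P j. sp_vec P i l = 0};
         nt = complex_of_real (nrm Q (sp_target Q));
         isnew = (\<lambda>i. \<exists>a a' k. i = Pr a a' \<and> a \<in> sp_idx P j \<and> k \<in> sp_inputs Q \<and> a' \<in> sp_idx Q k)
     in
     \<lparr> sp_basis = {Pr l b | l b. l \<in> sp_basis P - Z \<and> b \<in> sp_basis Q} \<union> Zl ` Z,
       sp_target = (\<lambda>c. case c of Pr l b \<Rightarrow> sp_target P l * sp_target Q b
                                | Zl l \<Rightarrow> sp_target P l * nt | L _ \<Rightarrow> 0),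
       sp_inputs = (sp_inputs P - {j}) \<union> sp_inputs Q,
       sp_idx = (\<lambda>k. if k \<in> sp_inputs Q then {Pr a a' | a a'. a \<in> sp_idx P j \<and> a' \<in> sp_idx Q k}
                     else if k = j then {} else sp_idx P k),
       sp_vec = (\<lambda>i c. if isnew i then
                          (case i of Pr a a' \<Rightarrow>
                             (case c of Pr l b \<Rightarrow> sp_vec P a l * sp_vec Q a' b | _ \<Rightarrow> 0)
                           | _ \<Rightarrow> 0)
                       else
                          (case c of Pr l b \<Rightarrow> sp_vec P i l * sp_target Q b
                                   | Zl l \<Rightarrow> sp_vec P i l * nt | L _ \<Rightarrow> 0)) \<rparr>)"

inductive reach :: "form \<Rightarrow> weights \<Rightarrow> sprog \<Rightarrow> bool" for \<phi> s where
  root: "[] \<in> gates \<phi> \<Longrightarrow> reach \<phi> s (gateprog \<phi> s [])"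
| step: "reach \<phi> s P \<Longrightarrow> p \<in> sp_inputs P \<Longrightarrow> p \<in> gates \<phi> \<Longrightarrow>
           reach \<phi> s (compose (gateprog \<phi> s p) p P)"

definition brace_in :: "form \<Rightarrow> weights \<Rightarrow> (nat \<Rightarrow> bool) \<Rightarrow> nat list \<Rightarrow> real" where
  "brace_in \<phi> s x v = (if isAND \<phi> v then alpha s v (jx \<phi> x v) else delta v)"

definition brace_out :: "form \<Rightarrow> weights \<Rightarrow> nat list \<Rightarrow> real" where
  "brace_out \<phi> s v = (if isAND \<phi> v then alphatot s v else delta v)"

definition brace_path :: "form \<Rightarrow> weights \<Rightarrow> nat \<Rightarrow> nat list \<Rightarrow> real" where
  "brace_path \<phi> s k v = (if isAND \<phi> v then beta v (jk \<phi> k v) else eps s v (jk \<phi> k v))"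

definition tcoef :: "form \<Rightarrow> weights \<Rightarrow> (nat \<Rightarrow> bool) \<Rightarrow> complex" where
  "tcoef \<phi> s x = complex_of_real
     ((\<Prod>v\<in>gates \<phi> \<inter> Tx \<phi> x. brace_in \<phi> s x v) * (\<Prod>v\<in>gates \<phi> - Tx \<phi> x. brace_out \<phi> s v))"

definition vcoef :: "form \<Rightarrow> weights \<Rightarrow> nat \<Rightarrow> (nat \<Rightarrow> bool) \<Rightarrow> complex" where
  "vcoef \<phi> s k x = (if x k then 0 else complex_of_real
     ((\<Prod>v\<in>gamma \<phi> k. brace_path \<phi> s k v) *
      (\<Prod>v\<in>(gates \<phi> \<inter> Tx \<phi> x) - gamma \<phi> k. brace_in \<phi> s x v) *
      (\<Prod>v\<in>gates \<phi> - Tx \<phi> x. brace_out \<phi> s v)))"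

end

theory Submission
  imports Defs
begin


lemma sub_append: "sub t (p @ q) = (case sub t p of None \<Rightarrow> None | Some u \<Rightarrow> sub u q)"
proof (induction p arbitrary: t)
  case Nil then show ?case by simp
next
  case (Cons i p) then show ?case by (cases t) auto
qed

lemma sub_snoc: "sub t (p @ [i]) = Some u \<Longrightarrow>
   \<exists>g a b. sub t p = Some (Gate g a b) \<and> i \<in> {1,2} \<and> u = (if i = 1 then a else b)"
proof -
  assume h: "sub t (p @ [i]) = Some u"
  then obtain w where w: "sub t p = Some w" "sub w [i] = Some u" by (auto simp: sub_append split: option.splits)
  then show ?thesis by (cases w) (auto split: if_splits)
qed

lemma sub_gate_child: "sub t p = Some (Gate g a b) \<Longrightarrow> sub t (p @ [1]) = Some a \<and> sub t (p @ [2]) = Some b"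
  by (simp add: sub_append)

lemma sub_leaf_ext: "sub t p = Some (Leaf k) \<Longrightarrow> sub t (p @ q) = Some u \<Longrightarrow> q = [] \<and> u = Leaf k"
  by (cases q) (auto simp: sub_append)

lemma sub_prefix: "sub t (p @ q) \<noteq> None \<Longrightarrow> sub t p \<noteq> None"
  by (auto simp: sub_append split: option.splits)

lemma sub_cons_gate: "sub t (p @ j # r) \<noteq> None \<Longrightarrow> \<exists>g a b. sub t p = Some (Gate g a b) \<and> j \<in> {1,2}"
proof -
  assume h: "sub t (p @ j # r) \<noteq> None"
  then have "sub t (p @ [j]) \<noteq> None" using sub_prefix[of t "p @ [j]" r] by simp
  then show ?thesis using sub_snoc by fastforce
qed

lemma leaves_sub: "sub t p = Some u \<Longrightarrow> set (leaves u) \<subseteq> set (leaves t)"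
proof (induction t arbitrary: p)
  case (Leaf x) then show ?case by (cases p) auto
next
  case (Gate g a b) then show ?case
    by (cases p) (auto split: if_splits)
qed

lemma distinct_sub: "distinct (leaves t) \<Longrightarrow> sub t p = Some u \<Longrightarrow> distinct (leaves u)"
proof (induction t arbitrary: p)
  case (Leaf x) then show ?case by (cases p) auto
next
  case (Gate g a b) then show ?case
    by (cases p) (auto split: if_splits)
qed

lemma leaf_in_leaves: "sub t p = Some (Leaf k) \<Longrightarrow> k \<in> set (leaves t)"
  using leaves_sub by fastforce

lemma leaves_has_pos: "k \<in> set (leaves t) \<Longrightarrow> \<exists>p. sub t p = Some (Leaf k)"
proof (induction t)
  case (Leaf x) then show ?case by (intro exI[of _ "[]"]) auto
next
  case (Gate g a b)
  then show ?case
  proof (cases "k \<in> set (leaves a)")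
    case True
    then obtain p where "sub a p = Some (Leaf k)" using Gate by auto
    then show ?thesis by (intro exI[of _ "1 # p"]) auto
  next
    case False
    then obtain p where "sub b p = Some (Leaf k)" using Gate by auto
    then show ?thesis by (intro exI[of _ "2 # p"]) auto
  qed
qed

lemma leaf_pos_unique: "distinct (leaves t) \<Longrightarrow> sub t p = Some (Leaf k) \<Longrightarrow> sub t q = Some (Leaf k) \<Longrightarrow> p = q"
proof (induction t arbitrary: p q)
  case (Leaf x) then show ?case by (cases p; cases q) auto
next
  case (Gate g a b)
  show ?case
  proof (cases p)
    case Nil then show ?thesis using Gate by simp
  next
    case (Cons i p')
    show ?thesis
    proof (cases q)
      case Nil then show ?thesis using Gate by simp
    next
      case (Cons j q')
      have da: "distinct (leaves a)" and db: "distinct (leaves b)" and dab: "set (leaves a) \<inter> set (leaves b) = {}"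
        using Gate.prems by auto
      show ?thesis using Gate.prems \<open>p = i # p'\<close> Cons Gate.IH(1)[OF da] Gate.IH(2)[OF db] dab
        by (auto split: if_splits dest!: leaf_in_leaves)
    qed
  qed
qed

lemma eval_mono: "(\<forall>k. y k \<longrightarrow> y' k) \<Longrightarrow> evalf t y \<Longrightarrow> evalf t y'"
proof (induction t)
  case (Gate g a b) then show ?case by (cases g) auto
qed auto

lemma eval_cong: "(\<forall>k\<in>set (leaves t). y k = y' k) \<Longrightarrow> evalf t y = evalf t y'"
proof (induction t)
  case (Gate g a b) then show ?case by (cases g) auto
qed auto

lemma eval_false_leaf: "\<not> evalf t y \<Longrightarrow> \<exists>k\<in>set (leaves t). \<not> y k"
proof (induction t)
  case (Gate g a b) then show ?case by (cases g) auto
qed auto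

lemma eval_local: "sub t r = Some u \<Longrightarrow> distinct (leaves t) \<Longrightarrow> evalf u y = evalf u y' \<Longrightarrow>
   (\<forall>k\<in>set (leaves t) - set (leaves u). y k = y' k) \<Longrightarrow> evalf t y = evalf t y'"
proof (induction t arbitrary: r)
  case (Leaf x) then show ?case by (cases r) auto
next
  case (Gate g a b)
  show ?case
  proof (cases r)
    case Nil then show ?thesis using Gate by simp
  next
    case (Cons i r')
    have da: "distinct (leaves a)" and db: "distinct (leaves b)" and dab: "set (leaves a) \<inter> set (leaves b) = {}"
      using Gate.prems by auto
    show ?thesis
    proof (cases "i = 1")
      case True
      then have su: "sub a r' = Some u" using Gate.prems Cons by simp
      have "evalf a y = evalf a y'" using Gate.IH(1)[OF su da] Gate.prems by auto
      moreover have "evalf b y = evalf b y'"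
        using eval_cong[of b y y'] Gate.prems leaves_sub[OF su] dab by auto
      ultimately show ?thesis by (cases g) auto
    next
      case False
      then have su: "sub b r' = Some u" using Gate.prems Cons by (simp split: if_splits)
      have "evalf b y = evalf b y'" using Gate.IH(2)[OF su db] Gate.prems by auto
      moreover have "evalf a y = evalf a y'"
        using eval_cong[of a y y'] Gate.prems leaves_sub[OF su] dab by auto
      ultimately show ?thesis by (cases g) auto
    qed
  qed
qed

lemma prefix_closed: "(\<forall>p i. p @ [i] \<in> S \<longrightarrow> p \<in> S) \<Longrightarrow> p @ q \<in> S \<Longrightarrow> p \<in> S"
proof (induction q rule: rev_induct)
  case Nil then show ?case by simp
next
  case (snoc i q) then show ?case by (metis append_assoc)
qed

lemma Tx_false: "Tx_ok \<phi> x S \<Longrightarrow> p \<in> S \<Longrightarrow> sub \<phi> p = Some u \<Longrightarrow> \<not> evalf u x"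
proof (induction u arbitrary: p)
  case (Leaf k) then show ?case unfolding Tx_ok_def by auto
next
  case (Gate g a b)
  note ch = sub_gate_child[OF Gate.prems(3)]
  show ?case
  proof (cases g)
    case AND
    then have "p @ [1] \<in> S \<or> p @ [2] \<in> S" using Gate.prems unfolding Tx_ok_def by metis
    then show ?thesis using Gate.IH ch Gate.prems(1) AND by auto
  next
    case OR
    then have "p @ [1] \<in> S \<and> p @ [2] \<in> S" using Gate.prems unfolding Tx_ok_def by metis
    then show ?thesis using Gate.IH ch Gate.prems(1) OR by auto
  qed
qed

lemma Tx_true: "Tx_ok \<phi> x S \<Longrightarrow> (\<forall>k. x k \<longrightarrow> y k) \<Longrightarrow> p \<notin> S \<Longrightarrow> sub \<phi> p = Some u \<Longrightarrow> evalf u y"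
proof (induction u arbitrary: p)
  case (Leaf k) then show ?case unfolding Tx_ok_def by auto
next
  case (Gate g a b)
  note ch = sub_gate_child[OF Gate.prems(4)]
  have "p @ [1] \<notin> S" "p @ [2] \<notin> S" using Gate.prems unfolding Tx_ok_def by blast+
  then show ?case using Gate.IH ch Gate.prems(1,2) by (cases g) auto
qed

lemma Tx_sub: "Tx_ok \<phi> x S1 \<Longrightarrow> Tx_ok \<phi> x S2 \<Longrightarrow> p \<in> S1 \<Longrightarrow> p \<in> S2"
proof (induction p rule: rev_induct)
  case Nil then show ?case unfolding Tx_ok_def by auto
next
  case (snoc i p)
  have pcl1: "\<forall>p i. p @ [i] \<in> S1 \<longrightarrow> p \<in> S1" using snoc.prems(1) unfolding Tx_ok_def by blast
  have pS1: "p \<in> S1" using pcl1 snoc.prems(3) by blast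
  then have pS2: "p \<in> S2" using snoc by blast
  have "sub \<phi> (p @ [i]) \<noteq> None" using snoc.prems unfolding Tx_ok_def by auto
  then obtain u where "sub \<phi> (p @ [i]) = Some u" by auto
  from sub_snoc[OF this] obtain g a b where gab: "sub \<phi> p = Some (Gate g a b)" "i \<in> {1,2}"
     "u = (if i = 1 then a else b)" by blast
  note ch = sub_gate_child[OF gab(1)]
  show ?case
  proof (cases g)
    case OR
    then show ?thesis using snoc.prems pS2 gab unfolding Tx_ok_def by auto
  next
    case AND
    show ?thesis
    proof (rule ccontr)
      assume nin: "p @ [i] \<notin> S2"
      have "evalf u x" using Tx_true[OF snoc.prems(2) _ nin] \<open>sub \<phi> (p @ [i]) = Some u\<close> by auto
      moreover have "\<not> evalf u x" using Tx_false[OF snoc.prems(1) snoc.prems(3)] \<open>sub \<phi> (p @ [i]) = Some u\<close> by auto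
      ultimately show False by simp
    qed
  qed
qed

lemma Tx_unique: "Tx_ok \<phi> x S1 \<Longrightarrow> Tx_ok \<phi> x S2 \<Longrightarrow> S1 = S2"
  using Tx_sub by blast

lemma or_child: "evalf (if i = 1 then a else b) y \<Longrightarrow> evalf (Gate OR a b) y"
  by (auto split: if_splits)
lemma and_child: "evalf (if i = 1 then a else b) y \<Longrightarrow> evalf (if i = 1 then b else a) y \<Longrightarrow> evalf (Gate AND a b) y"
  by (auto split: if_splits)

lemma Tx_flip: "Tx_ok \<phi> x S \<Longrightarrow> sub \<phi> p = Some u \<Longrightarrow> p @ q \<in> S \<Longrightarrow>
   sub \<phi> (p @ q) = Some (Leaf k) \<Longrightarrow> evalf u (x(k := True))"
proof (induction u arbitrary: p q)
  case (Leaf k')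
  then have "q = [] \<and> Leaf k = Leaf k'" using sub_leaf_ext by blast
  then show ?case by simp
next
  case (Gate g a b)
  note ch = sub_gate_child[OF Gate.prems(2)]
  obtain i q' where q: "q = i # q'" using Gate.prems by (cases q) auto
  have i12: "i \<in> {1,2}" using sub_cons_gate[of \<phi> p i q'] Gate.prems q by auto
  have pcl: "\<forall>p i. p @ [i] \<in> S \<longrightarrow> p \<in> S" using Gate.prems(1) unfolding Tx_ok_def by blast
  have piS: "p @ [i] \<in> S" using prefix_closed[OF pcl, of "p @ [i]" q'] Gate.prems(3) q by simp
  have ci: "evalf (if i = 1 then a else b) (x(k := True))"
  proof (cases "i = 1")
    case True
    have "evalf a (x(k := True))"
      using Gate.IH(1)[OF Gate.prems(1), of "p @ [i]" q'] ch Gate.prems(3,4) q True by (simp add: fun_upd_def)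
    then show ?thesis using True by simp
  next
    case False
    then have i2: "i = 2" using i12 by simp
    have "evalf b (x(k := True))"
      using Gate.IH(2)[OF Gate.prems(1), of "p @ [i]" q'] ch Gate.prems(3,4) q i2 by (simp add: fun_upd_def)
    then show ?thesis using False by simp
  qed
  show ?case
  proof (cases g)
    case OR from or_child[OF ci] show ?thesis unfolding OR .
  next
    case AND
    have pS: "p \<in> S" using pcl piS by blast
    have ex: "(p @ [1] \<in> S) \<noteq> (p @ [2] \<in> S)" using Gate.prems(1,2) pS AND unfolding Tx_ok_def by blast
    have other: "p @ [3 - i] \<notin> S" using ex piS i12 by auto
    have "evalf (if i = 1 then b else a) (x(k := True))"
      using Tx_true[OF Gate.prems(1) _ other] ch i12 by auto
    from and_child[OF ci this] show ?thesis unfolding AND .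
  qed
qed



definition kids :: "nat list set \<Rightarrow> nat list set" where
  "kids C = {c @ [i] | c i. c \<in> C \<and> i \<in> {1,2}}"

definition Sub :: "form \<Rightarrow> nat list set \<Rightarrow> nat list set set" where
  "Sub \<phi> C = {S. S \<subseteq> C \<union> kids C \<and> [] \<in> S \<and> (\<forall>p i. p @ [i] \<in> S \<longrightarrow> p \<in> S) \<and>
     (\<forall>p\<in>S \<inter> C. \<not> isAND \<phi> p \<longrightarrow> p @ [1] \<in> S \<and> p @ [2] \<in> S) \<and>
     (\<forall>p\<in>S \<inter> C. isAND \<phi> p \<longrightarrow> (p @ [1] \<in> S) \<noteq> (p @ [2] \<in> S))}"

definition Xf :: "form \<Rightarrow> nat \<Rightarrow> nat list set \<Rightarrow> (nat \<Rightarrow> bool)" where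
  "Xf \<phi> n S = (\<lambda>k. k \<in> {1..n} \<and> leafpos \<phi> k \<notin> S)"

lemma leafpos_eq: "distinct (leaves \<phi>) \<Longrightarrow> sub \<phi> p = Some (Leaf k) \<Longrightarrow> leafpos \<phi> k = p"
  unfolding leafpos_def using leaf_pos_unique by blast

lemma leafpos_ok: "distinct (leaves \<phi>) \<Longrightarrow> k \<in> set (leaves \<phi>) \<Longrightarrow> sub \<phi> (leafpos \<phi> k) = Some (Leaf k)"
  using leaves_has_pos leafpos_eq by metis

lemma gates_valid: "p \<in> gates \<phi> \<Longrightarrow> sub \<phi> p \<noteq> None"
  unfolding gates_def by auto

lemma kids_gates_valid: "p \<in> kids (gates \<phi>) \<Longrightarrow> sub \<phi> p \<noteq> None"
  unfolding kids_def gates_def by (auto dest: sub_gate_child)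

lemma valid_split: "\<exists>g a b. \<phi> = Gate g a b \<Longrightarrow> sub \<phi> p \<noteq> None \<Longrightarrow> p \<in> gates \<phi> \<or> p \<in> kids (gates \<phi>)"
proof (cases p rule: rev_cases)
  case Nil
  assume "\<exists>g a b. \<phi> = Gate g a b" then show ?thesis using Nil unfolding gates_def by auto
next
  case (snoc q i)
  assume "sub \<phi> p \<noteq> None"
  then obtain u where "sub \<phi> (q @ [i]) = Some u" using snoc by auto
  from sub_snoc[OF this] show ?thesis using snoc unfolding kids_def gates_def by blast
qed

lemma valid_eq: "\<exists>g a b. \<phi> = Gate g a b \<Longrightarrow> {p. sub \<phi> p \<noteq> None} = gates \<phi> \<union> kids (gates \<phi>)"
  using valid_split gates_valid kids_gates_valid by blast

lemma leafposs_eq: "\<exists>g a b. \<phi> = Gate g a b \<Longrightarrow> leafposs \<phi> = kids (gates \<phi>) - gates \<phi>"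
proof -
  assume r: "\<exists>g a b. \<phi> = Gate g a b"
  have "p \<in> leafposs \<phi> \<longleftrightarrow> sub \<phi> p \<noteq> None \<and> p \<notin> gates \<phi>" for p
    unfolding leafposs_def gates_def
    by (cases "sub \<phi> p") (auto, metis form.exhaust)
  then show ?thesis using valid_split[OF r] kids_gates_valid by blast
qed

lemma Tx_okD:
  assumes "Tx_ok \<phi> x S"
  shows "S \<subseteq> {p. sub \<phi> p \<noteq> None}" "[] \<in> S" "\<And>p i. p @ [i] \<in> S \<Longrightarrow> p \<in> S"
    "\<And>p k. sub \<phi> p = Some (Leaf k) \<Longrightarrow> (p \<in> S \<longleftrightarrow> \<not> x k)"
    "\<And>p a b. p \<in> S \<Longrightarrow> sub \<phi> p = Some (Gate OR a b) \<Longrightarrow> p @ [1] \<in> S \<and> p @ [2] \<in> S"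
    "\<And>p a b. p \<in> S \<Longrightarrow> sub \<phi> p = Some (Gate AND a b) \<Longrightarrow> (p @ [1] \<in> S) \<noteq> (p @ [2] \<in> S)"
  using assms unfolding Tx_ok_def by auto

lemma SubI:
  assumes "S \<subseteq> C \<union> kids C" "[] \<in> S" "\<And>p i. p @ [i] \<in> S \<Longrightarrow> p \<in> S"
    "\<And>p. p \<in> S \<Longrightarrow> p \<in> C \<Longrightarrow> \<not> isAND \<phi> p \<Longrightarrow> p @ [1] \<in> S \<and> p @ [2] \<in> S"
    "\<And>p. p \<in> S \<Longrightarrow> p \<in> C \<Longrightarrow> isAND \<phi> p \<Longrightarrow> (p @ [1] \<in> S) \<noteq> (p @ [2] \<in> S)"
  shows "S \<in> Sub \<phi> C"
  unfolding Sub_def using assms by (intro CollectI conjI ballI allI impI) auto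

lemma SubD:
  assumes "S \<in> Sub \<phi> C"
  shows "S \<subseteq> C \<union> kids C" "[] \<in> S" "\<And>p i. p @ [i] \<in> S \<Longrightarrow> p \<in> S"
    "\<And>p. p \<in> S \<Longrightarrow> p \<in> C \<Longrightarrow> \<not> isAND \<phi> p \<Longrightarrow> p @ [1] \<in> S \<and> p @ [2] \<in> S"
    "\<And>p. p \<in> S \<Longrightarrow> p \<in> C \<Longrightarrow> isAND \<phi> p \<Longrightarrow> (p @ [1] \<in> S) \<noteq> (p @ [2] \<in> S)"
  using assms unfolding Sub_def by auto

lemma gate_cases: "p \<in> gates \<phi> \<Longrightarrow> \<not> isAND \<phi> p \<Longrightarrow> \<exists>a b. sub \<phi> p = Some (Gate OR a b)"
proof -
  assume "p \<in> gates \<phi>" "\<not> isAND \<phi> p"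
  then obtain g a b where "sub \<phi> p = Some (Gate g a b)" unfolding gates_def by auto
  then show ?thesis using \<open>\<not> isAND \<phi> p\<close> unfolding isAND_def by (cases g) auto
qed

lemma Tx_ok_Sub: "\<exists>g a b. \<phi> = Gate g a b \<Longrightarrow> Tx_ok \<phi> x S \<Longrightarrow> S \<in> Sub \<phi> (gates \<phi>)"
proof -
  assume r: "\<exists>g a b. \<phi> = Gate g a b" and t: "Tx_ok \<phi> x S"
  note T = Tx_okD[OF t]
  show ?thesis
  proof (rule SubI)
    show "S \<subseteq> gates \<phi> \<union> kids (gates \<phi>)" using T(1) valid_eq[OF r] by blast
    show "[] \<in> S" by (rule T(2))
    show "\<And>p i. p @ [i] \<in> S \<Longrightarrow> p \<in> S" by (rule T(3))
    fix p assume "p \<in> S" "p \<in> gates \<phi>"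
    show "\<not> isAND \<phi> p \<Longrightarrow> p @ [1] \<in> S \<and> p @ [2] \<in> S"
      using gate_cases[OF \<open>p \<in> gates \<phi>\<close>] T(5) \<open>p \<in> S\<close> by blast
    show "isAND \<phi> p \<Longrightarrow> (p @ [1] \<in> S) \<noteq> (p @ [2] \<in> S)"
      using T(6) \<open>p \<in> S\<close> unfolding isAND_def by blast
  qed
qed

lemma Sub_Tx_ok:
  assumes dist: "distinct (leaves \<phi>)" and lv: "set (leaves \<phi>) = {1..n}"
    and r: "\<exists>g a b. \<phi> = Gate g a b" and S: "S \<in> Sub \<phi> (gates \<phi>)"
  shows "Tx_ok \<phi> (Xf \<phi> n S) S"
proof -
  have a1: "S \<subseteq> {p. sub \<phi> p \<noteq> None}" using SubD(1)[OF S] valid_eq[OF r] by blast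
  have a2: "\<forall>p k. sub \<phi> p = Some (Leaf k) \<longrightarrow> (p \<in> S \<longleftrightarrow> \<not> Xf \<phi> n S k)"
  proof (intro allI impI)
    fix p k assume h: "sub \<phi> p = Some (Leaf k)"
    have "k \<in> {1..n}" using leaf_in_leaves[OF h] lv by simp
    then show "(p \<in> S \<longleftrightarrow> \<not> Xf \<phi> n S k)" using leafpos_eq[OF dist h] unfolding Xf_def by simp
  qed
  have a3: "\<forall>p\<in>S. \<forall>a b. sub \<phi> p = Some (Gate OR a b) \<longrightarrow> p @ [1] \<in> S \<and> p @ [2] \<in> S"
  proof (intro ballI allI impI)
    fix p a b assume "p \<in> S" "sub \<phi> p = Some (Gate OR a b)"
    moreover then have "p \<in> gates \<phi>" "\<not> isAND \<phi> p" unfolding gates_def isAND_def by auto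
    ultimately show "p @ [1] \<in> S \<and> p @ [2] \<in> S" using SubD(4)[OF S] by blast
  qed
  have a4: "\<forall>p\<in>S. \<forall>a b. sub \<phi> p = Some (Gate AND a b) \<longrightarrow> (p @ [1] \<in> S) \<noteq> (p @ [2] \<in> S)"
  proof (intro ballI allI impI)
    fix p a b assume "p \<in> S" "sub \<phi> p = Some (Gate AND a b)"
    moreover then have "p \<in> gates \<phi>" "isAND \<phi> p" unfolding gates_def isAND_def by auto
    ultimately show "(p @ [1] \<in> S) \<noteq> (p @ [2] \<in> S)" using SubD(5)[OF S] by blast
  qed
  have a5: "[] \<in> S" "\<forall>p i. p @ [i] \<in> S \<longrightarrow> p \<in> S" using SubD[OF S] by auto
  show ?thesis unfolding Tx_ok_def by (intro conjI a1 a2 a3 a4 a5)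
qed

lemma Sub_maxfalse:
  assumes dist: "distinct (leaves \<phi>)" and lv: "set (leaves \<phi>) = {1..n}"
    and r: "\<exists>g a b. \<phi> = Gate g a b" and S: "S \<in> Sub \<phi> (gates \<phi>)"
  shows "Xf \<phi> n S \<in> Uset \<phi> n" and "Tx \<phi> (Xf \<phi> n S) = S"
proof -
  note t = Sub_Tx_ok[OF assms]
  have e0: "[] \<in> S" using SubD(2)[OF S] .
  have "\<not> evalf \<phi> (Xf \<phi> n S)" using Tx_false[OF t e0] by simp
  moreover have "evalf \<phi> ((Xf \<phi> n S)(k := True))" if k: "k \<in> {1..n}" "\<not> Xf \<phi> n S k" for k
  proof -
    have "leafpos \<phi> k \<in> S" using k unfolding Xf_def by simp
    moreover have "sub \<phi> ([] @ leafpos \<phi> k) = Some (Leaf k)" using leafpos_ok[OF dist] k lv by simp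
    ultimately have "evalf \<phi> ((Xf \<phi> n S)(k := True))"
      using Tx_flip[OF t, where p="[]" and q="leafpos \<phi> k" and k=k and u=\<phi>] by simp
    then show ?thesis .
  qed
  moreover have "\<forall>k. Xf \<phi> n S k \<longrightarrow> k \<in> {1..n}" unfolding Xf_def by blast
  ultimately show "Xf \<phi> n S \<in> Uset \<phi> n" unfolding Uset_def maxfalse_def by blast
  show "Tx \<phi> (Xf \<phi> n S) = S" unfolding Tx_def
    by (rule the_equality[where P="\<lambda>S'. Tx_ok \<phi> (Xf \<phi> n S) S'", OF t]) (rule Tx_unique[OF _ t])
qed

lemma snoc_split: "q @ r = p @ [i] \<Longrightarrow> (r = [] \<and> q = p @ [i]) \<or> (\<exists>r'. p = q @ r')"
  by (cases r rule: rev_cases) auto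

lemma Uset_Tx_ok:
  assumes dist: "distinct (leaves \<phi>)" and lv: "set (leaves \<phi>) = {1..n}"
    and r: "\<exists>g a b. \<phi> = Gate g a b" and xU: "x \<in> Uset \<phi> n"
  shows "Tx_ok \<phi> x (Tx \<phi> x)" and "Xf \<phi> n (Tx \<phi> x) = x"
proof -
  have mf1: "\<And>k. x k \<Longrightarrow> k \<in> {1..n}" and mf2: "\<not> evalf \<phi> x"
    and mf3: "\<And>k. k \<in> {1..n} \<Longrightarrow> \<not> x k \<Longrightarrow> evalf \<phi> (x(k := True))"
    using xU unfolding Uset_def maxfalse_def by auto
  have crit: False if k: "k \<in> {1..n}" "\<not> x k" and q: "sub \<phi> q = Some u" and ku: "k \<in> set (leaves u)"
    and same: "evalf u (x(k := True)) = evalf u x" for k q u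
  proof -
    have "evalf \<phi> x = evalf \<phi> (x(k := True))"
      by (rule eval_local[OF q dist]) (use same ku in auto)
    then show False using mf2 mf3[OF k] by simp
  qed
  define Sx where "Sx = {p. sub \<phi> p \<noteq> None \<and> (\<forall>q r u. p = q @ r \<longrightarrow> sub \<phi> q = Some u \<longrightarrow> \<not> evalf u x)}"
  have memI: "p \<in> Sx" if "sub \<phi> p \<noteq> None" "\<And>q r u. p = q @ r \<Longrightarrow> sub \<phi> q = Some u \<Longrightarrow> \<not> evalf u x" for p
    using that unfolding Sx_def by blast
  have memD: "\<not> evalf u x" if "p \<in> Sx" "p = q @ r" "sub \<phi> q = Some u" for p q r u
    using that unfolding Sx_def by blast
  have memV: "sub \<phi> p \<noteq> None" if "p \<in> Sx" for p using that unfolding Sx_def by blast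
  have childmem: "p @ [i] \<in> Sx \<longleftrightarrow> \<not> evalf c x" if pS: "p \<in> Sx" and c: "sub \<phi> (p @ [i]) = Some c" for p i c
  proof
    assume "p @ [i] \<in> Sx" then show "\<not> evalf c x" using memD[of "p @ [i]" "p @ [i]" "[]" c] c by simp
  next
    assume nc: "\<not> evalf c x"
    show "p @ [i] \<in> Sx"
    proof (rule memI)
      show "sub \<phi> (p @ [i]) \<noteq> None" using c by simp
      fix q r u assume "p @ [i] = q @ r" "sub \<phi> q = Some u"
      then show "\<not> evalf u x" using snoc_split[of q r p i] nc c memD[OF pS] by auto
    qed
  qed
  have t1: "Sx \<subseteq> {p. sub \<phi> p \<noteq> None}" using memV by blast
  have t2: "[] \<in> Sx" by (rule memI) (use mf2 r in auto)
  have t3: "\<forall>p i. p @ [i] \<in> Sx \<longrightarrow> p \<in> Sx"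
  proof (intro allI impI)
    fix p i assume h: "p @ [i] \<in> Sx"
    show "p \<in> Sx"
    proof (rule memI)
      show "sub \<phi> p \<noteq> None" using memV[OF h] sub_prefix by blast
      fix q r u assume "p = q @ r" "sub \<phi> q = Some u"
      then show "\<not> evalf u x" using memD[OF h, of q "r @ [i]"] by simp
    qed
  qed
  have t4: "\<forall>p k. sub \<phi> p = Some (Leaf k) \<longrightarrow> (p \<in> Sx \<longleftrightarrow> \<not> x k)"
  proof (intro allI impI iffI)
    fix p k assume "sub \<phi> p = Some (Leaf k)" "p \<in> Sx"
    then show "\<not> x k" using memD[of p p "[]"] by auto
  next
    fix p k assume pk: "sub \<phi> p = Some (Leaf k)" and nk: "\<not> x k"
    have k: "k \<in> {1..n}" using leaf_in_leaves[OF pk] lv by simp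
    show "p \<in> Sx"
    proof (rule memI)
      show "sub \<phi> p \<noteq> None" using pk by simp
      fix q r u assume pq: "p = q @ r" and qu: "sub \<phi> q = Some u"
      show "\<not> evalf u x"
      proof
        assume ev: "evalf u x"
        have "sub u r = Some (Leaf k)" using pk pq qu by (simp add: sub_append)
        then have ku: "k \<in> set (leaves u)" by (rule leaf_in_leaves)
        have "evalf u (x(k := True))" by (rule eval_mono[OF _ ev]) simp
        then show False using crit[OF k nk qu ku] ev by simp
      qed
    qed
  qed
  have t5: "\<forall>p\<in>Sx. \<forall>a b. sub \<phi> p = Some (Gate OR a b) \<longrightarrow> p @ [1] \<in> Sx \<and> p @ [2] \<in> Sx"
  proof (intro ballI allI impI)
    fix p a b assume pS: "p \<in> Sx" and g: "sub \<phi> p = Some (Gate OR a b)"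
    have "\<not> evalf (Gate OR a b) x" using memD[OF pS, of p "[]"] g by simp
    then show "p @ [1] \<in> Sx \<and> p @ [2] \<in> Sx" using childmem[OF pS] sub_gate_child[OF g] by auto
  qed
  have t6: "\<forall>p\<in>Sx. \<forall>a b. sub \<phi> p = Some (Gate AND a b) \<longrightarrow> (p @ [1] \<in> Sx) \<noteq> (p @ [2] \<in> Sx)"
  proof (intro ballI allI impI)
    fix p a b assume pS: "p \<in> Sx" and g: "sub \<phi> p = Some (Gate AND a b)"
    have nf: "\<not> evalf (Gate AND a b) x" using memD[OF pS, of p "[]"] g by simp
    have m1: "p @ [1] \<in> Sx \<longleftrightarrow> \<not> evalf a x" and m2: "p @ [2] \<in> Sx \<longleftrightarrow> \<not> evalf b x"
      using childmem[OF pS] sub_gate_child[OF g] by auto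
    have "\<not> (\<not> evalf a x \<and> \<not> evalf b x)"
    proof
      assume both: "\<not> evalf a x \<and> \<not> evalf b x"
      then obtain k where kb: "k \<in> set (leaves b)" "\<not> x k" using eval_false_leaf by blast
      have du: "distinct (leaves (Gate AND a b))" using distinct_sub[OF dist g] .
      have kna: "k \<notin> set (leaves a)" using du kb by auto
      have "evalf a (x(k := True)) = evalf a x" by (rule eval_cong[symmetric]) (use kna in auto)
      then have "evalf (Gate AND a b) (x(k := True)) = evalf (Gate AND a b) x" using both by simp
      moreover have "k \<in> {1..n}" using leaves_sub[OF g] kb lv by auto
      ultimately show False using crit[OF _ kb(2) g] kb(1) by auto
    qed
    then show "(p @ [1] \<in> Sx) \<noteq> (p @ [2] \<in> Sx)" using m1 m2 nf by auto
  qed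
  have tx: "Tx_ok \<phi> x Sx" unfolding Tx_ok_def by (intro conjI t1 t2 t3 t4 t5 t6)
  have eq: "Tx \<phi> x = Sx" unfolding Tx_def
    by (rule the_equality[where P="\<lambda>S'. Tx_ok \<phi> x S'", OF tx]) (rule Tx_unique[OF _ tx])
  show "Tx_ok \<phi> x (Tx \<phi> x)" using tx eq by simp
  show "Xf \<phi> n (Tx \<phi> x) = x"
  proof
    fix k
    show "Xf \<phi> n (Tx \<phi> x) k = x k"
    proof (cases "k \<in> {1..n}")
      case True
      have "sub \<phi> (leafpos \<phi> k) = Some (Leaf k)" using leafpos_ok[OF dist] True lv by simp
      then show ?thesis using t4 True eq unfolding Xf_def by auto
    next
      case False then show ?thesis using mf1 unfolding Xf_def by auto
    qed
  qed
qed


lemma Xf_bij: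
  assumes dist: "distinct (leaves \<phi>)" and lv: "set (leaves \<phi>) = {1..n}"
    and r: "\<exists>g a b. \<phi> = Gate g a b"
  shows "bij_betw (Xf \<phi> n) (Sub \<phi> (gates \<phi>)) (Uset \<phi> n)"
proof (rule bij_betwI')
  fix S1 S2 assume "S1 \<in> Sub \<phi> (gates \<phi>)" "S2 \<in> Sub \<phi> (gates \<phi>)"
  then show "(Xf \<phi> n S1 = Xf \<phi> n S2) = (S1 = S2)" using Sub_maxfalse(2)[OF dist lv r] by metis
next
  fix S assume "S \<in> Sub \<phi> (gates \<phi>)"
  then show "Xf \<phi> n S \<in> Uset \<phi> n" using Sub_maxfalse(1)[OF dist lv r] by blast
next
  fix x assume x: "x \<in> Uset \<phi> n"
  show "\<exists>S\<in>Sub \<phi> (gates \<phi>). x = Xf \<phi> n S"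
    using Uset_Tx_ok[OF dist lv r x] Tx_ok_Sub[OF r] by metis
qed



fun encr :: "nat list \<Rightarrow> lab" where
  "encr [] = L 0"
| "encr [i] = L i"
| "encr (i # j # r) = Pr (encr (j # r)) (L i)"

definition enc :: "nat list \<Rightarrow> lab" where "enc p = encr (rev p)"

lemma enc_single[simp]: "enc [i] = L i" by (simp add: enc_def)

lemma enc_snoc: "p \<noteq> [] \<Longrightarrow> enc (p @ [i]) = Pr (enc p) (L i)"
  unfolding enc_def by (cases "rev p") auto

lemma encr_cons: "a \<noteq> [] \<Longrightarrow> encr (i # a) = Pr (encr a) (L i)"
  by (cases a) auto

lemma encr_inj: "a \<noteq> [] \<Longrightarrow> b \<noteq> [] \<Longrightarrow> encr a = encr b \<Longrightarrow> a = b"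
proof (induction a arbitrary: b)
  case Nil then show ?case by simp
next
  case (Cons i a)
  obtain j b' where b: "b = j # b'" using Cons.prems(2) by (cases b) auto
  have e: "encr (i # a) = encr (j # b')" using Cons.prems(3) b by simp
  show ?case
  proof (cases a)
    case Nil
    show ?thesis
    proof (cases b')
      case Nil then show ?thesis using e b \<open>a = []\<close> by simp
    next
      case (Cons j' r') then show ?thesis using e b \<open>a = []\<close> by simp
    qed
  next
    case (Cons i' r)
    show ?thesis
    proof (cases b')
      case Nil then show ?thesis using e b \<open>a = i' # r\<close> by simp
    next
      case (Cons j' r')
      then have "encr a = encr b' \<and> i = j" using e \<open>a = i' # r\<close> by simp
      then show ?thesis using Cons.IH[of b'] b \<open>a = i' # r\<close> Cons by simp
    qed
  qed
qed

lemma enc_inj: "a \<noteq> [] \<Longrightarrow> b \<noteq> [] \<Longrightarrow> enc a = enc b \<Longrightarrow> a = b"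
proof -
  assume "a \<noteq> []" "b \<noteq> []" "enc a = enc b"
  then have "rev a = rev b" unfolding enc_def by (intro encr_inj) simp_all
  then show "a = b" by simp
qed

definition bin :: "form \<Rightarrow> weights \<Rightarrow> nat list set \<Rightarrow> nat list \<Rightarrow> real" where
  "bin \<phi> s S v = (if isAND \<phi> v then alpha s v (if v @ [1] \<in> S then 1 else 2) else delta v)"

definition path :: "nat list \<Rightarrow> nat list set" where
  "path p = {v. \<exists>q. q \<noteq> [] \<and> p = v @ q}"

definition bpath :: "form \<Rightarrow> weights \<Rightarrow> nat list \<Rightarrow> nat list \<Rightarrow> real" where
  "bpath \<phi> s p v = (if isAND \<phi> v then beta v (p ! length v) else eps s v (p ! length v))"

definition tc :: "form \<Rightarrow> weights \<Rightarrow> nat list set \<Rightarrow> nat list set \<Rightarrow> real" where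
  "tc \<phi> s C S = (\<Prod>v\<in>C \<inter> S. bin \<phi> s S v) * (\<Prod>v\<in>C - S. brace_out \<phi> s v)"

definition vc :: "form \<Rightarrow> weights \<Rightarrow> nat list set \<Rightarrow> nat list \<Rightarrow> nat list set \<Rightarrow> real" where
  "vc \<phi> s C p S = (if p \<in> S then (\<Prod>v\<in>path p. bpath \<phi> s p v) * (\<Prod>v\<in>C \<inter> S - path p. bin \<phi> s S v)
       * (\<Prod>v\<in>C - S. brace_out \<phi> s v) else 0)"

definition invt :: "form \<Rightarrow> weights \<Rightarrow> sprog \<Rightarrow> nat list set \<Rightarrow> (lab \<Rightarrow> nat list set) \<Rightarrow> bool" where
  "invt \<phi> s P C \<sigma> \<longleftrightarrow> finite (sp_basis P) \<and> finite C \<and> C \<subseteq> gates \<phi> \<and> [] \<in> C \<and>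
     (\<forall>p i. p @ [i] \<in> C \<longrightarrow> p \<in> C) \<and> sp_inputs P = kids C - C \<and>
     bij_betw \<sigma> (sp_basis P) (Sub \<phi> C) \<and>
     (\<forall>b\<in>sp_basis P. sp_target P b = complex_of_real (tc \<phi> s C (\<sigma> b))) \<and>
     (\<forall>p\<in>sp_inputs P. sp_idx P p = {enc p} \<and>
        (\<forall>b\<in>sp_basis P. sp_vec P (enc p) b = complex_of_real (vc \<phi> s C p (\<sigma> b))))"

lemma alpha_pos: "s v 1 > 0 \<Longrightarrow> s v 2 > 0 \<Longrightarrow> j \<in> {1,2} \<Longrightarrow> alpha s v j > 0"
  unfolding alpha_def by (auto intro: powr_gt_zero[THEN iffD2])

lemma eps_pos: "s v 1 > 0 \<Longrightarrow> s v 2 > 0 \<Longrightarrow> j \<in> {1,2} \<Longrightarrow> eps s v j > 0"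
  unfolding eps_def by (auto intro: powr_gt_zero[THEN iffD2])

lemma alphatot_pos: "s v 1 > 0 \<Longrightarrow> s v 2 > 0 \<Longrightarrow> alphatot s v > 0"
  unfolding alphatot_def using alpha_pos[of s v 1] by (simp add: add_pos_nonneg)

lemma bout_pos: "s v 1 > 0 \<Longrightarrow> s v 2 > 0 \<Longrightarrow> brace_out \<phi> s v > 0"
  unfolding brace_out_def delta_def using alphatot_pos by simp

lemma bin_pos: "s v 1 > 0 \<Longrightarrow> s v 2 > 0 \<Longrightarrow> bin \<phi> s S v > 0"
  unfolding bin_def delta_def using alpha_pos by simp

lemma bpath_pos: "s v 1 > 0 \<Longrightarrow> s v 2 > 0 \<Longrightarrow> p ! length v \<in> {1,2} \<Longrightarrow> bpath \<phi> s p v > 0"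
  unfolding bpath_def beta_def using eps_pos by simp

lemma tc_pos: "\<forall>v\<in>gates \<phi>. s v 1 > 0 \<and> s v 2 > 0 \<Longrightarrow> C \<subseteq> gates \<phi> \<Longrightarrow> tc \<phi> s C S > 0"
  unfolding tc_def
  by (intro mult_pos_pos prod_pos) (auto intro!: bin_pos bout_pos)

lemma path_idx: "v \<in> path p \<Longrightarrow> sub \<phi> p \<noteq> None \<Longrightarrow> p ! length v \<in> {1,2}"
proof -
  assume "v \<in> path p" "sub \<phi> p \<noteq> None"
  then obtain j w where p: "p = v @ j # w" unfolding path_def by (auto simp: neq_Nil_conv)
  then have "j \<in> {1,2}" using sub_cons_gate \<open>sub \<phi> p \<noteq> None\<close> by blast
  then show ?thesis using p by simp
qed

lemma vc_pos: "\<forall>v\<in>gates \<phi>. s v 1 > 0 \<and> s v 2 > 0 \<Longrightarrow> C \<subseteq> gates \<phi> \<Longrightarrow> path p \<subseteq> C \<Longrightarrow>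
   sub \<phi> p \<noteq> None \<Longrightarrow> p \<in> S \<Longrightarrow> vc \<phi> s C p S > 0"
proof -
  assume pos: "\<forall>v\<in>gates \<phi>. s v 1 > 0 \<and> s v 2 > 0" and C: "C \<subseteq> gates \<phi>" and pp: "path p \<subseteq> C"
    and v: "sub \<phi> p \<noteq> None" and pS: "p \<in> S"
  have "(\<Prod>v\<in>path p. bpath \<phi> s p v) > 0"
  proof (rule prod_pos)
    fix v assume "v \<in> path p"
    then show "bpath \<phi> s p v > 0" using bpath_pos[OF _ _ path_idx[OF _ v]] pos pp C by blast
  qed
  moreover have "(\<Prod>v\<in>C \<inter> S - path p. bin \<phi> s S v) > 0"
    using pos C by (intro prod_pos) (auto intro!: bin_pos)
  moreover have "(\<Prod>v\<in>C - S. brace_out \<phi> s v) > 0"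
    using pos C by (intro prod_pos) (auto intro!: bout_pos)
  ultimately show ?thesis unfolding vc_def using pS by simp
qed

lemma path_snoc: "path (p @ [i]) = insert p (path p)"
  unfolding path_def
  by (auto simp: append_eq_append_conv2 Cons_eq_append_conv append_eq_Cons_conv)

lemma path_Nil: "path [] = {}" unfolding path_def by auto

lemma kids_root: "kids {[]} = {[1],[2]}" unfolding kids_def by auto

lemma Sub_root_mem: "S \<in> Sub \<phi> {[]} \<longleftrightarrow> S \<subseteq> {[],[1],[2]} \<and> [] \<in> S \<and>
   (\<not> isAND \<phi> [] \<longrightarrow> [1] \<in> S \<and> [2] \<in> S) \<and> (isAND \<phi> [] \<longrightarrow> ([1] \<in> S) \<noteq> ([2] \<in> S))"
proof
  assume "S \<in> Sub \<phi> {[]}"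
  note D = SubD[OF this]
  show "S \<subseteq> {[],[1],[2]} \<and> [] \<in> S \<and>
   (\<not> isAND \<phi> [] \<longrightarrow> [1] \<in> S \<and> [2] \<in> S) \<and> (isAND \<phi> [] \<longrightarrow> ([1] \<in> S) \<noteq> ([2] \<in> S))"
    using D(1,2) D(4)[of "[]"] D(5)[of "[]"] kids_root by auto
next
  assume h: "S \<subseteq> {[],[1],[2]} \<and> [] \<in> S \<and>
   (\<not> isAND \<phi> [] \<longrightarrow> [1] \<in> S \<and> [2] \<in> S) \<and> (isAND \<phi> [] \<longrightarrow> ([1] \<in> S) \<noteq> ([2] \<in> S))"
  show "S \<in> Sub \<phi> {[]}"
  proof (rule SubI)
    show "S \<subseteq> {[]} \<union> kids {[]}" using h kids_root by auto
    show "[] \<in> S" using h by auto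
    show "p \<in> S" if "p @ [i] \<in> S" for p i
    proof -
      have "p @ [i] \<in> {[],[1],[2]}" using that h by blast
      then have "p = []" by auto
      then show ?thesis using h by simp
    qed
  qed (use h in auto)
qed

lemma Sub_root_AND: "isAND \<phi> [] \<Longrightarrow> Sub \<phi> {[]} = {{[],[1]}, {[],[2]}}"
proof (intro set_eqI iffI)
  fix S assume a: "isAND \<phi> []" and "S \<in> Sub \<phi> {[]}"
  then have h: "S \<subseteq> {[],[1],[2]}" "[] \<in> S" "([1] \<in> S) \<noteq> ([2] \<in> S)" using Sub_root_mem by blast+
  show "S \<in> {{[],[1]}, {[],[2]}}"
  proof (cases "[1] \<in> S")
    case True then have "S = {[],[1]}" using h by auto
    then show ?thesis by simp
  next
    case False then have "S = {[],[2]}" using h by auto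
    then show ?thesis by simp
  qed
next
  fix S :: "nat list set" assume a: "isAND \<phi> []" and "S \<in> {{[],[1]}, {[],[2]}}"
  then show "S \<in> Sub \<phi> {[]}" unfolding Sub_root_mem by auto
qed

lemma Sub_root_OR: "\<not> isAND \<phi> [] \<Longrightarrow> Sub \<phi> {[]} = {{[],[1],[2]}}"
proof (intro set_eqI iffI)
  fix S assume a: "\<not> isAND \<phi> []" and "S \<in> Sub \<phi> {[]}"
  then have h: "S \<subseteq> {[],[1],[2]}" "[] \<in> S" "[1] \<in> S" "[2] \<in> S" using Sub_root_mem by blast+
  then have "S = {[],[1],[2]}" by auto
  then show "S \<in> {{[],[1],[2]}}" by simp
next
  fix S :: "nat list set" assume a: "\<not> isAND \<phi> []" and "S \<in> {{[],[1],[2]}}"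
  then show "S \<in> Sub \<phi> {[]}" unfolding Sub_root_mem by auto
qed

lemma tc_root: "[] \<in> S \<Longrightarrow> tc \<phi> s {[]} S = bin \<phi> s S []"
proof -
  assume "[] \<in> S"
  then have "{[]} \<inter> S = {[]}" "{[]} - S = {}" by auto
  then show ?thesis unfolding tc_def by simp
qed

lemma vc_root: "[] \<in> S \<Longrightarrow> vc \<phi> s {[]} [i] S = (if [i] \<in> S then bpath \<phi> s [i] [] else 0)"
proof -
  assume "[] \<in> S"
  then have "{[]} \<inter> S - path [i] = {}" "{[]} - S = {}" "path [i] = {[]}"
    using path_snoc[of "[]" i] path_Nil by auto
  then show ?thesis unfolding vc_def by simp
qed

lemma root_inv:
  assumes "[] \<in> gates \<phi>"
  shows "\<exists>\<sigma>. invt \<phi> s (gateprog \<phi> s []) {[]} \<sigma>"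
proof (cases "isAND \<phi> []")
  case True
  define \<sigma> where "\<sigma> = (\<lambda>b. if b = L 1 then {[],[1]} else {[],[2::nat]})"
  have P: "sp_basis (gateprog \<phi> s []) = {L 1, L 2}"
    "sp_inputs (gateprog \<phi> s []) = {[1],[2]}"
    "\<And>b. sp_target (gateprog \<phi> s []) b = (if b = L 1 then complex_of_real (alpha s [] 1)
                          else if b = L 2 then complex_of_real (alpha s [] 2) else 0)"
    "\<And>q. sp_idx (gateprog \<phi> s []) q = (if q = [1] then {L 1} else if q = [2] then {L 2} else {})"
    "\<And>i b. sp_vec (gateprog \<phi> s []) i b = (if i = L 1 \<and> b = L 1 then complex_of_real (beta [] 1)
                         else if i = L 2 \<and> b = L 2 then complex_of_real (beta [] 2) else 0)"
    using True by (simp_all add: gateprog_def)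
  have s1: "\<sigma> (L 1) = {[],[1]}" "\<sigma> (L 2) = {[],[2]}" unfolding \<sigma>_def by simp_all
  have ne: "{[],[1::nat]} \<noteq> {[],[2]}"
  proof
    assume "{[],[1::nat]} = {[],[2]}"
    moreover have "[1::nat] \<in> {[],[1]}" by simp
    ultimately have "[1::nat] \<in> {[],[2]}" by simp
    then show False by simp
  qed
  have bij: "bij_betw \<sigma> {L 1, L 2} (Sub \<phi> {[]})"
    unfolding Sub_root_AND[OF True] bij_betw_def inj_on_def using s1 ne by auto
  have inp: "kids {[]} - {[]} = {[1],[2]}" using kids_root by auto
  show ?thesis
  proof (intro exI[of _ \<sigma>])
    show "invt \<phi> s (gateprog \<phi> s []) {[]} \<sigma>"
      unfolding invt_def P(1,2) inp
    proof (intro conjI ballI)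
      show "{[]} \<subseteq> gates \<phi>" using assms by simp
      show "\<forall>p i. p @ [i] \<in> {[]} \<longrightarrow> p \<in> {[]}" by simp
      show "bij_betw \<sigma> {L 1, L 2} (Sub \<phi> {[]})" by (rule bij)
    next
      fix b assume "b \<in> {L 1, L 2}"
      then have "b = L 1 \<or> b = L 2" by simp
      then show "sp_target (gateprog \<phi> s []) b = complex_of_real (tc \<phi> s {[]} (\<sigma> b))"
      proof
        assume "b = L 1" then show ?thesis unfolding P(3) using True by (simp add: tc_root bin_def \<sigma>_def)
      next
        assume "b = L 2" then show ?thesis unfolding P(3) using True by (simp add: tc_root bin_def \<sigma>_def)
      qed
    next
      fix p :: "nat list" assume p: "p \<in> {[1],[2]}"
      show "sp_idx (gateprog \<phi> s []) p = {enc p}" using p P(4) by auto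
      fix b assume "b \<in> {L 1, L 2}"
      then have "b = L 1 \<or> b = L 2" by simp
      moreover have "p = [1] \<or> p = [2]" using p by simp
      ultimately show "sp_vec (gateprog \<phi> s []) (enc p) b = complex_of_real (vc \<phi> s {[]} p (\<sigma> b))"
        unfolding P(5) using True by (elim disjE) (simp_all add: vc_root bpath_def \<sigma>_def)
    qed simp_all
  qed
next
  case False
  define \<sigma> where "\<sigma> = (\<lambda>b::lab. {[],[1],[2::nat]})"
  have P: "sp_basis (gateprog \<phi> s []) = {L 1}"
    "sp_inputs (gateprog \<phi> s []) = {[1],[2]}"
    "\<And>b. sp_target (gateprog \<phi> s []) b = (if b = L 1 then complex_of_real (delta []) else 0)"
    "\<And>q. sp_idx (gateprog \<phi> s []) q = (if q = [1] then {L 1} else if q = [2] then {L 2} else {})"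
    "\<And>i b. sp_vec (gateprog \<phi> s []) i b = (if b = L 1 then
                            (if i = L 1 then complex_of_real (eps s [] 1)
                             else if i = L 2 then complex_of_real (eps s [] 2) else 0)
                          else 0)"
    using False by (simp_all add: gateprog_def)
  have bij: "bij_betw \<sigma> {L 1} (Sub \<phi> {[]})"
    unfolding Sub_root_OR[OF False] \<sigma>_def bij_betw_def inj_on_def by auto
  have inp: "kids {[]} - {[]} = {[1],[2]}" using kids_root by auto
  show ?thesis
  proof (intro exI[of _ \<sigma>])
    show "invt \<phi> s (gateprog \<phi> s []) {[]} \<sigma>"
      unfolding invt_def P(1,2) inp
    proof (intro conjI ballI)
      show "{[]} \<subseteq> gates \<phi>" using assms by simp
      show "\<forall>p i. p @ [i] \<in> {[]} \<longrightarrow> p \<in> {[]}" by simp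
      show "bij_betw \<sigma> {L 1} (Sub \<phi> {[]})" by (rule bij)
    next
      fix b assume "b \<in> {L 1}"
      then show "sp_target (gateprog \<phi> s []) b = complex_of_real (tc \<phi> s {[]} (\<sigma> b))"
        unfolding P(3) using False by (simp add: tc_root \<sigma>_def bin_def)
    next
      fix p :: "nat list" assume p: "p \<in> {[1],[2]}"
      show "sp_idx (gateprog \<phi> s []) p = {enc p}" using p P(4) by auto
      fix b assume "b \<in> {L 1}"
      moreover have "p = [1] \<or> p = [2]" using p by simp
      ultimately show "sp_vec (gateprog \<phi> s []) (enc p) b = complex_of_real (vc \<phi> s {[]} p (\<sigma> b))"
        unfolding P(5) using False by (elim disjE) (simp_all add: vc_root \<sigma>_def bpath_def)
    qed simp_all
  qed
qed

lemma bin_agree: "(v @ [1] \<in> S') = (v @ [1] \<in> S) \<Longrightarrow> bin \<phi> s S' v = bin \<phi> s S v"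
  unfolding bin_def by simp

lemma tc_ext_in:
  assumes "finite C" "p \<notin> C" "p \<in> S'" "C \<inter> S' = C \<inter> S" "C - S' = C - S"
    "\<And>v. v \<in> C \<Longrightarrow> bin \<phi> s S' v = bin \<phi> s S v"
  shows "tc \<phi> s (insert p C) S' = tc \<phi> s C S * bin \<phi> s S' p"
proof -
  have e1: "insert p C \<inter> S' = insert p (C \<inter> S)" using assms by auto
  have e2: "insert p C - S' = C - S" using assms by auto
  have "(\<Prod>v\<in>insert p (C \<inter> S). bin \<phi> s S' v) = bin \<phi> s S' p * (\<Prod>v\<in>C \<inter> S. bin \<phi> s S' v)"
    using assms by (intro prod.insert) auto
  also have "(\<Prod>v\<in>C \<inter> S. bin \<phi> s S' v) = (\<Prod>v\<in>C \<inter> S. bin \<phi> s S v)"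
    using assms by (intro prod.cong) auto
  finally show ?thesis unfolding tc_def e1 e2 by (simp add: algebra_simps)
qed

lemma tc_ext_out:
  assumes "finite C" "p \<notin> C" "p \<notin> S"
  shows "tc \<phi> s (insert p C) S = tc \<phi> s C S * brace_out \<phi> s p"
proof -
  have e1: "insert p C \<inter> S = C \<inter> S" using assms by auto
  have e2: "insert p C - S = insert p (C - S)" using assms by auto
  have "(\<Prod>v\<in>insert p (C - S). brace_out \<phi> s v) = brace_out \<phi> s p * (\<Prod>v\<in>C - S. brace_out \<phi> s v)"
    using assms by (intro prod.insert) auto
  then show ?thesis unfolding tc_def e1 e2 by (simp add: algebra_simps)
qed

lemma vc_ext_in:
  assumes "finite C" "p \<notin> C" "p \<in> S'" "C \<inter> S' = C \<inter> S" "C - S' = C - S"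
    "\<And>v. v \<in> C \<Longrightarrow> bin \<phi> s S' v = bin \<phi> s S v" "p \<notin> path q" "(q \<in> S') = (q \<in> S)"
  shows "vc \<phi> s (insert p C) q S' = vc \<phi> s C q S * bin \<phi> s S' p"
proof (cases "q \<in> S")
  case False then show ?thesis using assms unfolding vc_def by simp
next
  case True
  have e1: "insert p C \<inter> S' - path q = insert p (C \<inter> S - path q)" using assms by auto
  have e2: "insert p C - S' = C - S" using assms by auto
  have "(\<Prod>v\<in>insert p (C \<inter> S - path q). bin \<phi> s S' v) = bin \<phi> s S' p * (\<Prod>v\<in>C \<inter> S - path q. bin \<phi> s S' v)"
    using assms by (intro prod.insert) auto
  also have "(\<Prod>v\<in>C \<inter> S - path q. bin \<phi> s S' v) = (\<Prod>v\<in>C \<inter> S - path q. bin \<phi> s S v)"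
    using assms by (intro prod.cong) auto
  finally show ?thesis unfolding vc_def e1 e2 using True assms(8) by (simp add: algebra_simps)
qed

lemma vc_ext_out:
  assumes "finite C" "p \<notin> C" "p \<notin> S" "p \<notin> path q"
  shows "vc \<phi> s (insert p C) q S = vc \<phi> s C q S * brace_out \<phi> s p"
proof (cases "q \<in> S")
  case False then show ?thesis using assms unfolding vc_def by simp
next
  case True
  have e1: "insert p C \<inter> S - path q = C \<inter> S - path q" using assms by auto
  have e2: "insert p C - S = insert p (C - S)" using assms by auto
  have "(\<Prod>v\<in>insert p (C - S). brace_out \<phi> s v) = brace_out \<phi> s p * (\<Prod>v\<in>C - S. brace_out \<phi> s v)"
    using assms by (intro prod.insert) auto
  then show ?thesis unfolding vc_def e1 e2 using True by (simp add: algebra_simps)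
qed

lemma path_not_self: "p \<notin> path p" unfolding path_def by auto

lemma bpath_snoc: "v \<in> path p \<Longrightarrow> bpath \<phi> s (p @ [i]) v = bpath \<phi> s p v"
proof -
  assume "v \<in> path p"
  then have "length v < length p" unfolding path_def by auto
  then show ?thesis unfolding bpath_def by (simp add: nth_append)
qed

lemma vc_new:
  assumes "finite C" "p \<notin> C" "p \<in> S" "p \<in> S'" "C \<inter> S' = C \<inter> S" "C - S' = C - S"
    "\<And>v. v \<in> C \<Longrightarrow> bin \<phi> s S' v = bin \<phi> s S v" "path p \<subseteq> C"
  shows "vc \<phi> s (insert p C) (p @ [i]) S' =
     (if p @ [i] \<in> S' then vc \<phi> s C p S * bpath \<phi> s (p @ [i]) p else 0)"
proof (cases "p @ [i] \<in> S'")
  case False then show ?thesis unfolding vc_def by simp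
next
  case True
  have fp: "finite (path p)" using assms(1,8) finite_subset by blast
  have e1: "insert p C \<inter> S' - path (p @ [i]) = C \<inter> S - path p"
    using assms unfolding path_snoc by auto
  have e2: "insert p C - S' = C - S" using assms by auto
  have "(\<Prod>v\<in>path (p @ [i]). bpath \<phi> s (p @ [i]) v) = bpath \<phi> s (p @ [i]) p * (\<Prod>v\<in>path p. bpath \<phi> s (p @ [i]) v)"
    unfolding path_snoc using fp path_not_self by (intro prod.insert) auto
  also have "(\<Prod>v\<in>path p. bpath \<phi> s (p @ [i]) v) = (\<Prod>v\<in>path p. bpath \<phi> s p v)"
    by (intro prod.cong) (auto simp: bpath_snoc)
  finally have pp: "(\<Prod>v\<in>path (p @ [i]). bpath \<phi> s (p @ [i]) v) = bpath \<phi> s (p @ [i]) p * (\<Prod>v\<in>path p. bpath \<phi> s p v)" .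
  have "(\<Prod>v\<in>C \<inter> S - path p. bin \<phi> s S' v) = (\<Prod>v\<in>C \<inter> S - path p. bin \<phi> s S v)"
    using assms by (intro prod.cong) auto
  then show ?thesis unfolding vc_def e1 e2 pp using True assms(3) by (simp add: algebra_simps)
qed




lemma kids_snoc_notC: "\<forall>q i. q @ [i] \<in> C \<longrightarrow> q \<in> C \<Longrightarrow> p \<notin> C \<Longrightarrow> p @ [i] \<notin> C"
  by blast

lemma kids_snoc_notK: "p \<notin> C \<Longrightarrow> p @ [i] \<notin> kids C"
  unfolding kids_def by auto

lemma path_kids: "\<forall>q i. q @ [i] \<in> C \<longrightarrow> q \<in> C \<Longrightarrow> q \<in> kids C \<Longrightarrow> path q \<subseteq> C"
proof
  fix v assume cl: "\<forall>q i. q @ [i] \<in> C \<longrightarrow> q \<in> C" and q: "q \<in> kids C" and v: "v \<in> path q"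
  obtain c j where c: "q = c @ [j]" "c \<in> C" using q unfolding kids_def by blast
  obtain w where w: "w \<noteq> []" "q = v @ w" using v unfolding path_def by blast
  obtain w' where "c = v @ w'" using w c by (cases w rule: rev_cases) auto
  then show "v \<in> C" using prefix_closed[of C v w'] cl c(2) by blast
qed

lemma Sub_no_kid: "S \<in> Sub \<phi> C \<Longrightarrow> \<forall>q i. q @ [i] \<in> C \<longrightarrow> q \<in> C \<Longrightarrow> p \<notin> C \<Longrightarrow> p @ [i] \<notin> S"
proof
  assume S: "S \<in> Sub \<phi> C" and cl: "\<forall>q i. q @ [i] \<in> C \<longrightarrow> q \<in> C" and pnC: "p \<notin> C" and "p @ [i] \<in> S"
  then have "p @ [i] \<in> C \<union> kids C" using SubD(1)[OF S] by blast
  moreover have "p @ [i] \<notin> C" using kids_snoc_notC[OF cl pnC] .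
  moreover have "p @ [i] \<notin> kids C" using kids_snoc_notK[OF pnC] .
  ultimately show False by blast
qed

lemma Sub_ext_out:
  assumes S: "S \<in> Sub \<phi> C" and pS: "p \<notin> S"
  shows "S \<in> Sub \<phi> (insert p C)"
proof -
  note D = SubD[OF S]
  show ?thesis
  proof (rule SubI)
    show "S \<subseteq> insert p C \<union> kids (insert p C)" using D(1) unfolding kids_def by blast
  qed (use D pS in auto)
qed

lemma Sub_ext_in:
  assumes S: "S \<in> Sub \<phi> C" and pS: "p \<in> S" and pnC: "p \<notin> C"
    and cl: "\<forall>q i. q @ [i] \<in> C \<longrightarrow> q \<in> C" and K: "K \<subseteq> {p @ [1], p @ [2]}" "\<not> isAND \<phi> p \<Longrightarrow> K = {p @ [1], p @ [2]}"
      "isAND \<phi> p \<Longrightarrow> (p @ [1] \<in> K) \<noteq> (p @ [2] \<in> K)"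
  shows "S \<union> K \<in> Sub \<phi> (insert p C)"
proof -
  note D = SubD[OF S]
  have Kq: "q = p" if "q @ [i] \<in> K" for q i using that K(1) by auto
  have Kc: "v @ [i] \<in> S \<union> K \<longleftrightarrow> v @ [i] \<in> S" if "v \<in> C" for v i
    using Kq that pnC by blast
  show ?thesis
  proof (rule SubI)
    show "S \<union> K \<subseteq> insert p C \<union> kids (insert p C)" using D(1) K(1) unfolding kids_def by blast
    show "[] \<in> S \<union> K" using D(2) by blast
    show "q \<in> S \<union> K" if "q @ [i] \<in> S \<union> K" for q i using that D(3) Kq pS by blast
    fix q assume q: "q \<in> S \<union> K" "q \<in> insert p C"
    show "\<not> isAND \<phi> q \<Longrightarrow> q @ [1] \<in> S \<union> K \<and> q @ [2] \<in> S \<union> K"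
    proof -
      assume na: "\<not> isAND \<phi> q"
      show ?thesis
      proof (cases "q = p")
        case True then show ?thesis using K(2) na by simp
      next
        case False
        have "q \<notin> K" using K(1) kids_snoc_notC[OF cl pnC] q(2) False by auto
        then have "q \<in> C" "q \<in> S" using q False by auto
        then show ?thesis using D(4) na by blast
      qed
    qed
    show "isAND \<phi> q \<Longrightarrow> (q @ [1] \<in> S \<union> K) \<noteq> (q @ [2] \<in> S \<union> K)"
    proof -
      assume a: "isAND \<phi> q"
      show ?thesis
      proof (cases "q = p")
        case True
        have "p @ [1] \<notin> S" "p @ [2] \<notin> S" using Sub_no_kid[OF S cl pnC] by auto
        then show ?thesis using K(3) a True by simp
      next
        case False
        have "q \<notin> K" using K(1) kids_snoc_notC[OF cl pnC] q(2) False by auto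
        then have qC: "q \<in> C" "q \<in> S" using q False by auto
        then show ?thesis using D(5) a Kc[OF qC(1)] by blast
      qed
    qed
  qed
qed

lemma kids_insert: "kids (insert p C) = kids C \<union> {p @ [1], p @ [2]}"
  unfolding kids_def by auto

lemma Sub_restrict:
  assumes S': "S' \<in> Sub \<phi> (insert p C)" and cl: "\<forall>q i. q @ [i] \<in> C \<longrightarrow> q \<in> C"
    and pK: "p \<in> kids C" and pnC: "p \<notin> C"
  shows "S' - {p @ [1], p @ [2]} \<in> Sub \<phi> C"
    and "p \<notin> S' \<Longrightarrow> p @ [1] \<notin> S' \<and> p @ [2] \<notin> S'"
    and "p \<in> S' \<Longrightarrow> \<not> isAND \<phi> p \<Longrightarrow> p @ [1] \<in> S' \<and> p @ [2] \<in> S'"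
    and "p \<in> S' \<Longrightarrow> isAND \<phi> p \<Longrightarrow> (p @ [1] \<in> S') \<noteq> (p @ [2] \<in> S')"
proof -
  note D = SubD[OF S']
  let ?K = "{p @ [1], p @ [2]}"
  have sub': "S' \<subseteq> insert p C \<union> kids C \<union> ?K" using D(1) kids_insert by blast
  have deep: "p @ [j] @ [i] \<notin> S'" for j i
  proof
    assume h: "p @ [j] @ [i] \<in> S'"
    have n1: "p @ [j] @ [i] \<noteq> p" by simp
    have n2: "p @ [j] @ [i] \<notin> C" using kids_snoc_notC[OF cl pnC, of j] cl by (metis append_assoc)
    have n3: "p @ [j] @ [i] \<notin> kids C" using kids_snoc_notK[of "p @ [j]" C i] kids_snoc_notC[OF cl pnC, of j] by simp
    have n4: "p @ [j] @ [i] \<notin> ?K" by simp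
    show False using h sub' n1 n2 n3 n4 by blast
  qed
  show "S' - ?K \<in> Sub \<phi> C"
  proof (rule SubI)
    show "S' - ?K \<subseteq> C \<union> kids C" using sub' pK by blast
    show "[] \<in> S' - ?K" using D(2) by simp
    show "q \<in> S' - ?K" if "q @ [i] \<in> S' - ?K" for q i
    proof -
      have "q \<in> S'" using that D(3) by blast
      moreover have "q \<notin> ?K" using that deep by auto
      ultimately show ?thesis by blast
    qed
    fix q assume q: "q \<in> S' - ?K" "q \<in> C"
    then have qp: "q \<noteq> p" using pnC by blast
    have eq: "q @ [i] \<in> S' - ?K \<longleftrightarrow> q @ [i] \<in> S'" for i using qp by auto
    show "\<not> isAND \<phi> q \<Longrightarrow> q @ [1] \<in> S' - ?K \<and> q @ [2] \<in> S' - ?K"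
      using D(4)[of q] q eq by blast
    show "isAND \<phi> q \<Longrightarrow> (q @ [1] \<in> S' - ?K) \<noteq> (q @ [2] \<in> S' - ?K)"
      using D(5)[of q] q eq by blast
  qed
  show "p \<notin> S' \<Longrightarrow> p @ [1] \<notin> S' \<and> p @ [2] \<notin> S'" using D(3) by blast
  show "p \<in> S' \<Longrightarrow> \<not> isAND \<phi> p \<Longrightarrow> p @ [1] \<in> S' \<and> p @ [2] \<in> S'" using D(4) by blast
  show "p \<in> S' \<Longrightarrow> isAND \<phi> p \<Longrightarrow> (p @ [1] \<in> S') \<noteq> (p @ [2] \<in> S')" using D(5) by blast
qed

definition Zset :: "sprog \<Rightarrow> nat list \<Rightarrow> lab set" where
  "Zset P j = {l \<in> sp_basis P. \<forall>i\<in>sp_idx P j. sp_vec P i l = 0}"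

definition isnew :: "sprog \<Rightarrow> nat list \<Rightarrow> sprog \<Rightarrow> lab \<Rightarrow> bool" where
  "isnew Q j P i = (\<exists>a a' k. i = Pr a a' \<and> a \<in> sp_idx P j \<and> k \<in> sp_inputs Q \<and> a' \<in> sp_idx Q k)"

lemma compose_simps:
  "sp_basis (compose Q j P) = {Pr l b | l b. l \<in> sp_basis P - Zset P j \<and> b \<in> sp_basis Q} \<union> Zl ` Zset P j"
  "sp_target (compose Q j P) c = (case c of Pr l b \<Rightarrow> sp_target P l * sp_target Q b
      | Zl l \<Rightarrow> sp_target P l * complex_of_real (nrm Q (sp_target Q)) | L _ \<Rightarrow> 0)"
  "sp_inputs (compose Q j P) = (sp_inputs P - {j}) \<union> sp_inputs Q"
  "sp_idx (compose Q j P) k = (if k \<in> sp_inputs Q then {Pr a a' | a a'. a \<in> sp_idx P j \<and> a' \<in> sp_idx Q k}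
      else if k = j then {} else sp_idx P k)"
  "sp_vec (compose Q j P) i c = (if isnew Q j P i then
        (case i of Pr a a' \<Rightarrow> (case c of Pr l b \<Rightarrow> sp_vec P a l * sp_vec Q a' b | _ \<Rightarrow> 0) | _ \<Rightarrow> 0)
      else (case c of Pr l b \<Rightarrow> sp_vec P i l * sp_target Q b
             | Zl l \<Rightarrow> sp_vec P i l * complex_of_real (nrm Q (sp_target Q)) | L _ \<Rightarrow> 0))"
  unfolding compose_def Let_def Zset_def isnew_def by simp_all

lemma gp_common:
  "sp_inputs (gateprog \<phi> s p) = {p @ [1], p @ [2]}"
  "sp_idx (gateprog \<phi> s p) q = (if q = p @ [1] then {L 1} else if q = p @ [2] then {L 2} else {})"
  by (simp_all add: gateprog_def)

lemma gp_AND: assumes "isAND \<phi> p"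
  shows "sp_basis (gateprog \<phi> s p) = {L 1, L 2}"
    "sp_target (gateprog \<phi> s p) b = (if b = L 1 then complex_of_real (alpha s p 1)
                          else if b = L 2 then complex_of_real (alpha s p 2) else 0)"
    "sp_vec (gateprog \<phi> s p) i b = (if i = L 1 \<and> b = L 1 then complex_of_real (beta p 1)
                         else if i = L 2 \<and> b = L 2 then complex_of_real (beta p 2) else 0)"
  using assms by (simp_all add: gateprog_def)

lemma gp_OR: assumes "\<not> isAND \<phi> p"
  shows "sp_basis (gateprog \<phi> s p) = {L 1}"
    "sp_target (gateprog \<phi> s p) b = (if b = L 1 then complex_of_real (delta p) else 0)"
    "sp_vec (gateprog \<phi> s p) i b = (if b = L 1 then
                            (if i = L 1 then complex_of_real (eps s p 1)
                             else if i = L 2 then complex_of_real (eps s p 2) else 0)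
                          else 0)"
  using assms by (simp_all add: gateprog_def)

lemma gp_nrm: "nrm (gateprog \<phi> s p) (sp_target (gateprog \<phi> s p)) = brace_out \<phi> s p"
proof (cases "isAND \<phi> p")
  case True
  have "nrm (gateprog \<phi> s p) (sp_target (gateprog \<phi> s p)) = sqrt ((alpha s p 1)\<^sup>2 + (alpha s p 2)\<^sup>2)"
    unfolding nrm_def gp_AND[OF True] by simp
  then show ?thesis unfolding brace_out_def alphatot_def using True by simp
next
  case False
  have "nrm (gateprog \<phi> s p) (sp_target (gateprog \<phi> s p)) = 1"
    unfolding nrm_def gp_OR[OF False] by (simp add: delta_def)
  then show ?thesis unfolding brace_out_def delta_def using False by simp
qed




lemma step_invt:
  assumes pos: "\<forall>v\<in>gates \<phi>. s v 1 > 0 \<and> s v 2 > 0"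
    and I: "invt \<phi> s P C \<sigma>" and pI: "p \<in> sp_inputs P" and pg: "p \<in> gates \<phi>"
  shows "\<exists>\<sigma>'. invt \<phi> s (compose (gateprog \<phi> s p) p P) (insert p C) \<sigma>'"
proof -
  have fin: "finite (sp_basis P)" and fC: "finite C" and Cg: "C \<subseteq> gates \<phi>" and C0: "[] \<in> C"
    and cl: "\<forall>q i. q @ [i] \<in> C \<longrightarrow> q \<in> C" and inp: "sp_inputs P = kids C - C"
    and bij: "bij_betw \<sigma> (sp_basis P) (Sub \<phi> C)"
    using I unfolding invt_def by blast+
  have tgt: "\<And>b. b \<in> sp_basis P \<Longrightarrow> sp_target P b = complex_of_real (tc \<phi> s C (\<sigma> b))"
    using I unfolding invt_def by blast
  have idx: "\<And>q. q \<in> sp_inputs P \<Longrightarrow> sp_idx P q = {enc q}"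
    using I unfolding invt_def by blast
  have vec: "\<And>q b. q \<in> sp_inputs P \<Longrightarrow> b \<in> sp_basis P \<Longrightarrow>
      sp_vec P (enc q) b = complex_of_real (vc \<phi> s C q (\<sigma> b))"
    using I unfolding invt_def by blast
  define Q where "Q = gateprog \<phi> s p"
  define B where "B = sp_basis P"
  define BQ where "BQ = sp_basis Q"
  have pK: "p \<in> kids C" and pnC: "p \<notin> C" using pI inp by auto
  have pne: "p \<noteq> []" using pK unfolding kids_def by auto
  have pv: "sub \<phi> p \<noteq> None" using pg gates_valid by blast
  have pathp: "path p \<subseteq> C" using path_kids[OF cl pK] .
  have sS: "\<sigma> l \<in> Sub \<phi> C" if "l \<in> B" for l using bij that unfolding B_def bij_betw_def by blast
  have noKid: "p @ [i] \<notin> \<sigma> l" if "l \<in> B" for l i using Sub_no_kid[OF sS[OF that] cl pnC] .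
  have Zeq: "Zset P p = {l \<in> B. p \<notin> \<sigma> l}"
  proof -
    have "(\<forall>i\<in>sp_idx P p. sp_vec P i l = 0) \<longleftrightarrow> p \<notin> \<sigma> l" if l: "l \<in> B" for l
    proof -
      have "(\<forall>i\<in>sp_idx P p. sp_vec P i l = 0) \<longleftrightarrow> vc \<phi> s C p (\<sigma> l) = 0"
        using idx[OF pI] vec[OF pI] l unfolding B_def by simp
      also have "\<dots> \<longleftrightarrow> p \<notin> \<sigma> l"
      proof
        assume "vc \<phi> s C p (\<sigma> l) = 0"
        then show "p \<notin> \<sigma> l" using vc_pos[OF pos Cg pathp pv] by force
      next
        assume "p \<notin> \<sigma> l" then show "vc \<phi> s C p (\<sigma> l) = 0" unfolding vc_def by simp
      qed
      finally show ?thesis .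
    qed
    then show ?thesis unfolding Zset_def B_def by blast
  qed
  define ks where "ks b = (if isAND \<phi> p then {p @ [if b = L 1 then 1 else 2]} else {p @ [1], p @ [2]})" for b
  define \<sigma>' where "\<sigma>' c = (case c of Pr l b \<Rightarrow> \<sigma> l \<union> ks b | Zl l \<Rightarrow> \<sigma> l | L _ \<Rightarrow> {})" for c
  have BQ_AND: "isAND \<phi> p \<Longrightarrow> BQ = {L 1, L 2}" unfolding BQ_def Q_def using gp_AND by blast
  have BQ_OR: "\<not> isAND \<phi> p \<Longrightarrow> BQ = {L 1}" unfolding BQ_def Q_def using gp_OR by blast
  have finBQ: "finite BQ" using BQ_AND BQ_OR by (cases "isAND \<phi> p") auto
  have ksK: "ks b \<subseteq> {p @ [1], p @ [2]}" for b unfolding ks_def by auto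
  have ks_OR: "\<not> isAND \<phi> p \<Longrightarrow> ks b = {p @ [1], p @ [2]}" for b unfolding ks_def by simp
  have ks_AND: "isAND \<phi> p \<Longrightarrow> (p @ [1] \<in> ks b) \<noteq> (p @ [2] \<in> ks b)" for b unfolding ks_def by simp
  have ks1: "isAND \<phi> p \<Longrightarrow> p @ [1] \<in> ks b \<longleftrightarrow> b = L 1" for b unfolding ks_def by simp
  have ks_inj: "b = b'" if "b \<in> BQ" "b' \<in> BQ" "ks b = ks b'" for b b'
  proof (cases "isAND \<phi> p")
    case True
    then have "(p @ [1] \<in> ks b) = (p @ [1] \<in> ks b')" using that by simp
    then have "(b = L 1) = (b' = L 1)" using ks1[OF True] by simp
    then show ?thesis using that BQ_AND[OF True] by auto
  next
    case False then show ?thesis using that BQ_OR by auto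
  qed
  have ksq: "q = p" if "q @ [i] \<in> ks b" for q i b using that ksK by auto
  have ks_nC: "x \<notin> C" if "x \<in> ks b" for x b using that ksK kids_snoc_notC[OF cl pnC] by blast
  have CS1: "C \<inter> (\<sigma> l \<union> ks b) = C \<inter> \<sigma> l" for l b using ks_nC by blast
  have CS2: "C - (\<sigma> l \<union> ks b) = C - \<sigma> l" for l b using ks_nC by blast
  have binag: "bin \<phi> s (\<sigma> l \<union> ks b) v = bin \<phi> s (\<sigma> l) v" if "v \<in> C" for l b v
  proof (rule bin_agree)
    have "v @ [1] \<notin> ks b" using ksq that pnC by blast
    then show "(v @ [1] \<in> \<sigma> l \<union> ks b) = (v @ [1] \<in> \<sigma> l)" by blast
  qed
  have binp: "complex_of_real (bin \<phi> s (\<sigma> l \<union> ks b) p) = sp_target Q b" if "l \<in> B" "b \<in> BQ" for l b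
  proof (cases "isAND \<phi> p")
    case True
    have "(p @ [1] \<in> \<sigma> l \<union> ks b) = (b = L 1)" using noKid[OF that(1)] ks1[OF True] by blast
    then show ?thesis using that(2) BQ_AND[OF True] True unfolding Q_def gp_AND[OF True] bin_def by auto
  next
    case False
    then show ?thesis using that(2) BQ_OR unfolding Q_def gp_OR[OF False] bin_def by auto
  qed
  have B'eq: "sp_basis (compose Q p P) = {Pr l b | l b. l \<in> B \<and> p \<in> \<sigma> l \<and> b \<in> BQ} \<union> Zl ` {l \<in> B. p \<notin> \<sigma> l}"
    unfolding compose_simps Zeq B_def BQ_def by auto
  have bij': "bij_betw \<sigma>' (sp_basis (compose Q p P)) (Sub \<phi> (insert p C))"
  proof (rule bij_betwI')
    fix x y assume x: "x \<in> sp_basis (compose Q p P)" and y: "y \<in> sp_basis (compose Q p P)"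
    show "(\<sigma>' x = \<sigma>' y) = (x = y)"
    proof
      assume e: "\<sigma>' x = \<sigma>' y"
      have K0: "\<sigma> l \<union> ks b - {p @ [1], p @ [2]} = \<sigma> l" if "l \<in> B" for l b
        using noKid[OF that] ksK by blast
      have K1: "(\<sigma> l \<union> ks b) \<inter> {p @ [1], p @ [2]} = ks b" if "l \<in> B" for l b
        using noKid[OF that] ksK by blast
      have injs: "l = l'" if "l \<in> B" "l' \<in> B" "\<sigma> l = \<sigma> l'" for l l'
        using bij that unfolding bij_betw_def inj_on_def B_def by blast
      show "x = y"
      proof (cases "x \<in> Zl ` {l \<in> B. p \<notin> \<sigma> l}")
        case True
        then obtain l where l: "x = Zl l" "l \<in> B" "p \<notin> \<sigma> l" by blast
        show ?thesis
        proof (cases "y \<in> Zl ` {l \<in> B. p \<notin> \<sigma> l}")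
          case True
          then obtain l' where l': "y = Zl l'" "l' \<in> B" "p \<notin> \<sigma> l'" by blast
          then show ?thesis using e l injs unfolding \<sigma>'_def by simp
        next
          case False
          then obtain l' b' where l': "y = Pr l' b'" "l' \<in> B" "p \<in> \<sigma> l'" "b' \<in> BQ" using y B'eq by blast
          then show ?thesis using e l unfolding \<sigma>'_def by auto
        qed
      next
        case False
        then obtain l b where l: "x = Pr l b" "l \<in> B" "p \<in> \<sigma> l" "b \<in> BQ" using x B'eq by blast
        show ?thesis
        proof (cases "y \<in> Zl ` {l \<in> B. p \<notin> \<sigma> l}")
          case True
          then obtain l' where l': "y = Zl l'" "l' \<in> B" "p \<notin> \<sigma> l'" by blast
          then show ?thesis using e l unfolding \<sigma>'_def by auto
        next
          case False
          then obtain l' b' where l': "y = Pr l' b'" "l' \<in> B" "p \<in> \<sigma> l'" "b' \<in> BQ" using y B'eq by blast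
          have e': "\<sigma> l \<union> ks b = \<sigma> l' \<union> ks b'" using e l l' unfolding \<sigma>'_def by simp
          have "\<sigma> l = \<sigma> l'" using K0[OF l(2), of b] K0[OF l'(2), of b'] e' by simp
          then have "l = l'" using injs l l' by blast
          moreover have "ks b = ks b'" using K1[OF l(2), of b] K1[OF l'(2), of b'] e' by simp
          then have "b = b'" using ks_inj l l' by blast
          ultimately show ?thesis using l l' by simp
        qed
      qed
    qed simp
  next
    fix x assume x: "x \<in> sp_basis (compose Q p P)"
    show "\<sigma>' x \<in> Sub \<phi> (insert p C)"
    proof (cases "x \<in> Zl ` {l \<in> B. p \<notin> \<sigma> l}")
      case True
      then obtain l where l: "x = Zl l" "l \<in> B" "p \<notin> \<sigma> l" by blast
      then show ?thesis using Sub_ext_out[OF sS[OF l(2)] l(3)] unfolding \<sigma>'_def by simp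
    next
      case False
      then obtain l b where l: "x = Pr l b" "l \<in> B" "p \<in> \<sigma> l" "b \<in> BQ" using x B'eq by blast
      have "\<sigma> l \<union> ks b \<in> Sub \<phi> (insert p C)"
        by (rule Sub_ext_in[OF sS[OF l(2)] l(3) pnC cl ksK ks_OR ks_AND])
      then show ?thesis using l unfolding \<sigma>'_def by simp
    qed
  next
    fix S' assume S': "S' \<in> Sub \<phi> (insert p C)"
    let ?K = "{p @ [1], p @ [2]}"
    note R = Sub_restrict[OF S' cl pK pnC]
    obtain l where l: "l \<in> B" "\<sigma> l = S' - ?K"
      using R(1) bij unfolding bij_betw_def B_def by (metis imageE)
    show "\<exists>x\<in>sp_basis (compose Q p P). S' = \<sigma>' x"
    proof (cases "p \<in> S'")
      case False
      then have "S' = S' - ?K" using R(2) by blast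
      then have "\<sigma> l = S'" "p \<notin> \<sigma> l" using l False by auto
      then show ?thesis using l(1) unfolding B'eq \<sigma>'_def by (intro bexI[of _ "Zl l"]) auto
    next
      case True
      define b where "b = (if isAND \<phi> p \<and> p @ [1] \<notin> S' then L 2 else L 1)"
      have bQ: "b \<in> BQ" unfolding b_def using BQ_AND BQ_OR by auto
      have "S' \<inter> ?K = ks b"
      proof (cases "isAND \<phi> p")
        case True
        then show ?thesis using R(4)[OF \<open>p \<in> S'\<close> True] unfolding ks_def b_def by auto
      next
        case False
        then show ?thesis using R(3)[OF \<open>p \<in> S'\<close> False] unfolding ks_def b_def by auto
      qed
      then have "S' = \<sigma> l \<union> ks b" using l by blast
      moreover have "p \<in> \<sigma> l" using l True by auto
      ultimately show ?thesis using l(1) bQ unfolding B'eq \<sigma>'_def by (intro bexI[of _ "Pr l b"]) auto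
    qed
  qed
  have pin: "p \<in> \<sigma> l \<union> ks b" if "p \<in> \<sigma> l" for l b using that by blast
  have nt: "nrm Q (sp_target Q) = brace_out \<phi> s p" unfolding Q_def by (rule gp_nrm)
  have inpQ: "sp_inputs Q = {p @ [1], p @ [2]}" unfolding Q_def by (rule gp_common)
  have idxQ: "sp_idx Q q = (if q = p @ [1] then {L 1} else if q = p @ [2] then {L 2} else {})" for q
    unfolding Q_def by (rule gp_common)
  have inp': "sp_inputs (compose Q p P) = kids (insert p C) - insert p C"
  proof -
    have "sp_inputs (compose Q p P) = (kids C - C - {p}) \<union> {p @ [1], p @ [2]}"
      unfolding compose_simps inp inpQ by simp
    also have "\<dots> = kids (insert p C) - insert p C"
      unfolding kids_insert using kids_snoc_notC[OF cl pnC] by auto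
    finally show ?thesis .
  qed
  have finB': "finite (sp_basis (compose Q p P))"
  proof -
    have "sp_basis (compose Q p P) \<subseteq> (\<lambda>(l, b). Pr l b) ` (B \<times> BQ) \<union> Zl ` B"
      unfolding B'eq by auto
    moreover have "finite ((\<lambda>(l, b). Pr l b) ` (B \<times> BQ) \<union> Zl ` B)"
      using fin finBQ unfolding B_def by simp
    ultimately show ?thesis using finite_subset by blast
  qed
  have cl': "\<forall>q i. q @ [i] \<in> insert p C \<longrightarrow> q \<in> insert p C"
  proof (intro allI impI)
    fix q i assume h: "q @ [i] \<in> insert p C"
    show "q \<in> insert p C"
    proof (cases "q @ [i] = p")
      case True
      then show ?thesis using pK unfolding kids_def by auto
    next
      case False then show ?thesis using h cl by auto
    qed
  qed
  have tgt': "sp_target (compose Q p P) c = complex_of_real (tc \<phi> s (insert p C) (\<sigma>' c))"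
    if c: "c \<in> sp_basis (compose Q p P)" for c
  proof (cases "c \<in> Zl ` {l \<in> B. p \<notin> \<sigma> l}")
    case True
    then obtain l where l: "c = Zl l" "l \<in> B" "p \<notin> \<sigma> l" by blast
    have "sp_target (compose Q p P) c = sp_target P l * complex_of_real (brace_out \<phi> s p)"
      unfolding compose_simps nt l by simp
    also have "\<dots> = complex_of_real (tc \<phi> s (insert p C) (\<sigma>' c))"
      unfolding tgt[OF l(2)[unfolded B_def]] \<sigma>'_def l using tc_ext_out[OF fC pnC l(3)] by simp
    finally show ?thesis .
  next
    case False
    then obtain l b where l: "c = Pr l b" "l \<in> B" "p \<in> \<sigma> l" "b \<in> BQ" using c B'eq by blast
    have "sp_target (compose Q p P) c = sp_target P l * sp_target Q b"
      unfolding compose_simps l by simp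
    also have "\<dots> = complex_of_real (tc \<phi> s C (\<sigma> l) * bin \<phi> s (\<sigma> l \<union> ks b) p)"
      unfolding tgt[OF l(2)[unfolded B_def]] binp[OF l(2,4), symmetric] by simp
    also have "\<dots> = complex_of_real (tc \<phi> s (insert p C) (\<sigma>' c))"
      unfolding \<sigma>'_def l using tc_ext_in[OF fC pnC pin[OF l(3)] CS1 CS2 binag] by simp
    finally show ?thesis .
  qed
  have encnew: "enc (p @ [i]) = Pr (enc p) (L i)" for i using enc_snoc[OF pne] .
  have io: "sp_idx (compose Q p P) q = {enc q} \<and>
      (\<forall>c\<in>sp_basis (compose Q p P). sp_vec (compose Q p P) (enc q) c
          = complex_of_real (vc \<phi> s (insert p C) q (\<sigma>' c)))"
    if q: "q \<in> sp_inputs (compose Q p P)" for q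
  proof (cases "q \<in> {p @ [1], p @ [2]}")
    case True
    then obtain i where i: "q = p @ [i]" "i \<in> {1,2}" by auto
    have idxq: "sp_idx Q q = {L i}" using i idxQ by auto
    have "sp_idx (compose Q p P) q = {enc q}"
      unfolding compose_simps inpQ idx[OF pI] idxq using True i encnew by simp
    moreover have "sp_vec (compose Q p P) (enc q) c = complex_of_real (vc \<phi> s (insert p C) q (\<sigma>' c))"
      if c: "c \<in> sp_basis (compose Q p P)" for c
    proof -
      have new: "isnew Q p P (enc q)" unfolding isnew_def inpQ idx[OF pI] i encnew
        using idxq i by auto
      have eq: "enc q = Pr (enc p) (L i)" using i(1) encnew by simp
      have v0: "sp_vec (compose Q p P) (enc q) c =
          (case c of Pr l b \<Rightarrow> sp_vec P (enc p) l * sp_vec Q (L i) b | _ \<Rightarrow> 0)"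
        unfolding compose_simps using new unfolding eq by simp
      show ?thesis
      proof (cases "c \<in> Zl ` {l \<in> B. p \<notin> \<sigma> l}")
        case True
        then obtain l where l: "c = Zl l" "l \<in> B" "p \<notin> \<sigma> l" by blast
        have "p @ [i] \<notin> \<sigma> l" using noKid[OF l(2)] .
        then show ?thesis unfolding v0 unfolding l \<sigma>'_def vc_def i by simp
      next
        case False
        then obtain l b where l: "c = Pr l b" "l \<in> B" "p \<in> \<sigma> l" "b \<in> BQ" using c B'eq by blast
        have "vc \<phi> s (insert p C) q (\<sigma>' c) =
            (if p @ [i] \<in> \<sigma> l \<union> ks b then vc \<phi> s C p (\<sigma> l) * bpath \<phi> s (p @ [i]) p else 0)"
          unfolding \<sigma>'_def l i using vc_new[OF fC pnC l(3) pin[OF l(3)] CS1 CS2 binag pathp] by simp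
        moreover have "sp_vec Q (L i) b = (if p @ [i] \<in> \<sigma> l \<union> ks b then complex_of_real (bpath \<phi> s (p @ [i]) p) else 0)"
        proof (cases "isAND \<phi> p")
          case True
          have m: "p @ [i] \<in> \<sigma> l \<union> ks b \<longleftrightarrow> p @ [i] \<in> ks b" using noKid[OF l(2)] by blast
          have bb: "b = L 1 \<or> b = L 2" using l(4) BQ_AND[OF True] by simp
          have ii: "i = 1 \<or> i = 2" using i by simp
          show ?thesis unfolding m Q_def gp_AND[OF True] using bb ii True
            by (elim disjE) (simp_all add: ks_def bpath_def)
        next
          case False
          have m: "p @ [i] \<in> \<sigma> l \<union> ks b" using ks_OR[OF False] i by auto
          have bb: "b = L 1" using l(4) BQ_OR[OF False] by simp
          have ii: "i = 1 \<or> i = 2" using i by simp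
          show ?thesis unfolding Q_def gp_OR[OF False] using bb ii False m
            by (elim disjE) (simp_all add: bpath_def)
        qed
        ultimately show ?thesis unfolding v0 unfolding l using vec[OF pI l(2)[unfolded B_def]] by simp
      qed
    qed
    ultimately show ?thesis by blast
  next
    case False
    then have qI: "q \<in> sp_inputs P" "q \<noteq> p" using q unfolding compose_simps inpQ by auto
    have qK: "q \<in> kids C" using qI inp by auto
    have qne: "q \<noteq> []" using qK unfolding kids_def by auto
    have "sp_idx (compose Q p P) q = {enc q}"
      unfolding compose_simps inpQ using False qI idx by simp
    moreover have "sp_vec (compose Q p P) (enc q) c = complex_of_real (vc \<phi> s (insert p C) q (\<sigma>' c))"
      if c: "c \<in> sp_basis (compose Q p P)" for c
    proof -
      have notnew: "\<not> isnew Q p P (enc q)"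
      proof
        assume "isnew Q p P (enc q)"
        then obtain a' k where "enc q = Pr (enc p) a'" "k \<in> {p @ [1], p @ [2]}" "a' \<in> sp_idx Q k"
          unfolding isnew_def idx[OF pI] inpQ by blast
        then obtain i where "enc q = enc (p @ [i])" using idxQ encnew by (auto split: if_splits)
        then have "q = p @ [i]" using enc_inj qne by blast
        then show False using qK kids_snoc_notK[OF pnC] by blast
      qed
      have v0: "sp_vec (compose Q p P) (enc q) c =
          (case c of Pr l b \<Rightarrow> sp_vec P (enc q) l * sp_target Q b
             | Zl l \<Rightarrow> sp_vec P (enc q) l * complex_of_real (brace_out \<phi> s p) | L _ \<Rightarrow> 0)"
        unfolding compose_simps nt using notnew by simp
      have pnq: "p \<notin> path q" using path_kids[OF cl qK] pnC by blast
      show ?thesis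
      proof (cases "c \<in> Zl ` {l \<in> B. p \<notin> \<sigma> l}")
        case True
        then obtain l where l: "c = Zl l" "l \<in> B" "p \<notin> \<sigma> l" by blast
        show ?thesis unfolding v0 unfolding l \<sigma>'_def using vec[OF qI(1) l(2)[unfolded B_def]]
          using vc_ext_out[OF fC pnC l(3) pnq] by simp
      next
        case False
        then obtain l b where l: "c = Pr l b" "l \<in> B" "p \<in> \<sigma> l" "b \<in> BQ" using c B'eq by blast
        have qin: "(q \<in> \<sigma> l \<union> ks b) = (q \<in> \<sigma> l)"
          using ksK qK kids_snoc_notK[OF pnC] by blast
        show ?thesis unfolding v0 unfolding l \<sigma>'_def using vec[OF qI(1) l(2)[unfolded B_def]] binp[OF l(2,4)]
          using vc_ext_in[OF fC pnC pin[OF l(3)] CS1 CS2 binag pnq qin] by simp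
      qed
    qed
    ultimately show ?thesis by blast
  qed
  have "invt \<phi> s (compose Q p P) (insert p C) \<sigma>'"
    unfolding invt_def
  proof (intro conjI ballI)
    show "finite (sp_basis (compose Q p P))" by (rule finB')
    show "finite (insert p C)" using fC by simp
    show "insert p C \<subseteq> gates \<phi>" using Cg pg by simp
    show "[] \<in> insert p C" using C0 by simp
    show "\<forall>q i. q @ [i] \<in> insert p C \<longrightarrow> q \<in> insert p C" by (rule cl')
    show "sp_inputs (compose Q p P) = kids (insert p C) - insert p C" by (rule inp')
    show "bij_betw \<sigma>' (sp_basis (compose Q p P)) (Sub \<phi> (insert p C))" by (rule bij')
    show "sp_target (compose Q p P) c = complex_of_real (tc \<phi> s (insert p C) (\<sigma>' c))"
      if "c \<in> sp_basis (compose Q p P)" for c using tgt' that .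
  qed (use io in blast)+
  then show ?thesis unfolding Q_def by blast
qed





lemma reach_invt:
  assumes pos: "\<forall>v\<in>gates \<phi>. s v 1 > 0 \<and> s v 2 > 0"
  shows "reach \<phi> s P \<Longrightarrow> \<exists>C \<sigma>. invt \<phi> s P C \<sigma>"
proof (induction rule: reach.induct)
  case root then show ?case using root_inv by blast
next
  case (step P p)
  then obtain C \<sigma> where "invt \<phi> s P C \<sigma>" by blast
  then show ?case using step_invt[OF pos _ step(2,3)] by blast
qed

lemma C_gates:
  assumes I: "invt \<phi> s P C \<sigma>" and d: "sp_inputs P \<inter> gates \<phi> = {}"
  shows "C = gates \<phi>"
proof
  show "C \<subseteq> gates \<phi>" using I unfolding invt_def by blast
  have C0: "[] \<in> C" and inp: "sp_inputs P = kids C - C" using I unfolding invt_def by blast+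
  show "gates \<phi> \<subseteq> C"
  proof
    fix g assume "g \<in> gates \<phi>"
    then show "g \<in> C"
    proof (induction g rule: rev_induct)
      case Nil then show ?case using C0 by simp
    next
      case (snoc i q)
      then obtain u where "sub \<phi> (q @ [i]) = Some u" unfolding gates_def by blast
      from sub_snoc[OF this] obtain g a b where "sub \<phi> q = Some (Gate g a b)" "i \<in> {1,2}" by blast
      then have "q \<in> gates \<phi>" unfolding gates_def by blast
      then have "q \<in> C" using snoc.IH by blast
      then have "q @ [i] \<in> kids C" unfolding kids_def using \<open>i \<in> {1,2}\<close> by blast
      moreover have "q @ [i] \<notin> sp_inputs P" using d snoc.prems by blast
      ultimately show ?case using inp by blast
    qed
  qed
qed

lemma jx_eq:
  assumes r: "\<exists>g a b. \<phi> = Gate g a b" and S: "S \<in> Sub \<phi> (gates \<phi>)" and tx: "Tx \<phi> x = S"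
    and v: "v \<in> gates \<phi>" "v \<in> S" "isAND \<phi> v"
  shows "jx \<phi> x v = (if v @ [1] \<in> S then 1 else 2)"
proof -
  have ex: "(v @ [1] \<in> S) \<noteq> (v @ [2] \<in> S)" using SubD(5)[OF S v(2,1,3)] .
  show ?thesis unfolding jx_def tx
  proof (rule the_equality)
    show "(if v @ [1] \<in> S then 1 else 2) \<in> {1, 2} \<and> v @ [if v @ [1] \<in> S then 1 else 2] \<in> S"
      using ex by auto
    fix j assume "j \<in> {1, 2} \<and> v @ [j] \<in> S"
    then show "j = (if v @ [1] \<in> S then 1 else 2)" using ex by auto
  qed
qed

lemma tc_tcoef:
  assumes dist: "distinct (leaves \<phi>)" and lv: "set (leaves \<phi>) = {1..n}"
    and r: "\<exists>g a b. \<phi> = Gate g a b" and S: "S \<in> Sub \<phi> (gates \<phi>)"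
  shows "complex_of_real (tc \<phi> s (gates \<phi>) S) = tcoef \<phi> s (Xf \<phi> n S)"
proof -
  have tx: "Tx \<phi> (Xf \<phi> n S) = S" using Sub_maxfalse(2)[OF dist lv r S] .
  have "(\<Prod>v\<in>gates \<phi> \<inter> S. bin \<phi> s S v) = (\<Prod>v\<in>gates \<phi> \<inter> S. brace_in \<phi> s (Xf \<phi> n S) v)"
  proof (rule prod.cong)
    fix v assume "v \<in> gates \<phi> \<inter> S"
    then show "bin \<phi> s S v = brace_in \<phi> s (Xf \<phi> n S) v"
      unfolding bin_def brace_in_def using jx_eq[OF r S tx] by auto
  qed simp
  then show ?thesis unfolding tc_def tcoef_def tx by simp
qed

lemma gamma_path:
  assumes dist: "distinct (leaves \<phi>)" and lv: "set (leaves \<phi>) = {1..n}" and k: "k \<in> {1..n}"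
  shows "gamma \<phi> k = path (leafpos \<phi> k)"
proof -
  have lk: "sub \<phi> (leafpos \<phi> k) = Some (Leaf k)" using leafpos_ok[OF dist] k lv by simp
  show ?thesis
  proof (intro set_eqI iffI)
    fix v assume "v \<in> gamma \<phi> k"
    then obtain q where vq: "v \<in> gates \<phi>" "leafpos \<phi> k = v @ q" unfolding gamma_def by blast
    have "q \<noteq> []"
    proof
      assume "q = []"
      then have "sub \<phi> v = Some (Leaf k)" using lk vq by simp
      then show False using vq(1) unfolding gates_def by auto
    qed
    then show "v \<in> path (leafpos \<phi> k)" using vq unfolding path_def by blast
  next
    fix v assume "v \<in> path (leafpos \<phi> k)"
    then obtain q where q: "q \<noteq> []" "leafpos \<phi> k = v @ q" unfolding path_def by blast
    then obtain j q' where "q = j # q'" by (cases q) auto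
    then have "\<exists>g a b. sub \<phi> v = Some (Gate g a b)" using sub_cons_gate[of \<phi> v j q'] lk q by auto
    then show "v \<in> gamma \<phi> k" unfolding gamma_def gates_def using q by blast
  qed
qed

lemma vc_vcoef:
  assumes dist: "distinct (leaves \<phi>)" and lv: "set (leaves \<phi>) = {1..n}"
    and r: "\<exists>g a b. \<phi> = Gate g a b" and S: "S \<in> Sub \<phi> (gates \<phi>)" and k: "k \<in> {1..n}"
  shows "complex_of_real (vc \<phi> s (gates \<phi>) (leafpos \<phi> k) S) = vcoef \<phi> s k (Xf \<phi> n S)"
proof -
  have tx: "Tx \<phi> (Xf \<phi> n S) = S" using Sub_maxfalse(2)[OF dist lv r S] .
  have xk: "Xf \<phi> n S k \<longleftrightarrow> leafpos \<phi> k \<notin> S" using k unfolding Xf_def by simp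
  have g: "gamma \<phi> k = path (leafpos \<phi> k)" using gamma_path[OF dist lv k] .
  have p1: "(\<Prod>v\<in>path (leafpos \<phi> k). bpath \<phi> s (leafpos \<phi> k) v) = (\<Prod>v\<in>gamma \<phi> k. brace_path \<phi> s k v)"
    unfolding g bpath_def brace_path_def jk_def by simp
  have p2: "(\<Prod>v\<in>gates \<phi> \<inter> S - path (leafpos \<phi> k). bin \<phi> s S v) =
      (\<Prod>v\<in>gates \<phi> \<inter> S - gamma \<phi> k. brace_in \<phi> s (Xf \<phi> n S) v)"
    unfolding g
  proof (rule prod.cong)
    fix v assume "v \<in> gates \<phi> \<inter> S - path (leafpos \<phi> k)"
    then show "bin \<phi> s S v = brace_in \<phi> s (Xf \<phi> n S) v"
      unfolding bin_def brace_in_def using jx_eq[OF r S tx] by auto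
  qed simp
  show ?thesis unfolding vc_def vcoef_def tx p1 p2 using xk by simp
qed

theorem lemma3p6:
  fixes \<phi> :: form and n :: nat and s :: weights and P :: sprog
  assumes "distinct (leaves \<phi>)" and "set (leaves \<phi>) = {1..n}"
    and "\<exists>g a b. \<phi> = Gate g a b"
    and "\<forall>v\<in>gates \<phi>. s v 1 > 0 \<and> s v 2 > 0"
    and "reach \<phi> s P"
    and "sp_inputs P \<inter> gates \<phi> = {}"
  shows "\<exists>\<sigma>. bij_betw \<sigma> (sp_basis P) (Uset \<phi> n) \<and>
     (\<forall>b\<in>sp_basis P. sp_target P b = tcoef \<phi> s (\<sigma> b)) \<and>
     sp_inputs P = leafposs \<phi> \<and>
     (\<forall>k\<in>{1..n}. \<exists>i. sp_idx P (leafpos \<phi> k) = {i} \<and>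
        (\<forall>b\<in>sp_basis P. sp_vec P i b = vcoef \<phi> s k (\<sigma> b))) \<and>
     (\<forall>x\<in>Uset \<phi> n. \<forall>k\<in>{1..n}. vcoef \<phi> s k x = 0 \<longleftrightarrow> x k) \<and>
     (\<forall>x\<in>Uset \<phi> n. witness P (\<lambda>p. x (leaflabel \<phi> p))
        (\<lambda>b. if \<sigma> b = x then 1 / cnj (sp_target P b) else 0))"
proof -
  note dist = assms(1) and lv = assms(2) and r = assms(3) and pos = assms(4)
  obtain C \<sigma> where I: "invt \<phi> s P C \<sigma>" using reach_invt[OF pos assms(5)] by blast
  have CG: "C = gates \<phi>" using C_gates[OF I assms(6)] .
  have fin: "finite (sp_basis P)" and inp: "sp_inputs P = kids (gates \<phi>) - gates \<phi>"
    and bij: "bij_betw \<sigma> (sp_basis P) (Sub \<phi> (gates \<phi>))"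
    using I unfolding invt_def CG by blast+
  have tgt: "\<And>b. b \<in> sp_basis P \<Longrightarrow> sp_target P b = complex_of_real (tc \<phi> s (gates \<phi>) (\<sigma> b))"
    using I unfolding invt_def CG by blast
  have idx: "\<And>q. q \<in> sp_inputs P \<Longrightarrow> sp_idx P q = {enc q}"
    using I unfolding invt_def CG by blast
  have vec: "\<And>q b. q \<in> sp_inputs P \<Longrightarrow> b \<in> sp_basis P \<Longrightarrow>
      sp_vec P (enc q) b = complex_of_real (vc \<phi> s (gates \<phi>) q (\<sigma> b))"
    using I unfolding invt_def CG by blast
  define \<sigma>f where "\<sigma>f b = Xf \<phi> n (\<sigma> b)" for b
  have sS: "\<sigma> b \<in> Sub \<phi> (gates \<phi>)" if "b \<in> sp_basis P" for b
    using bij that unfolding bij_betw_def by blast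
  have bijf: "bij_betw \<sigma>f (sp_basis P) (Uset \<phi> n)"
    unfolding \<sigma>f_def using bij_betw_trans[OF bij Xf_bij[OF dist lv r]] by (simp add: comp_def)
  have inpL: "sp_inputs P = leafposs \<phi>" using inp leafposs_eq[OF r] by simp
  have lk: "sub \<phi> (leafpos \<phi> k) = Some (Leaf k)" if "k \<in> {1..n}" for k
    using leafpos_ok[OF dist] that lv by simp
  have lkI: "leafpos \<phi> k \<in> sp_inputs P" if "k \<in> {1..n}" for k
    using lk[OF that] unfolding inpL leafposs_def by blast
  have vecf: "sp_vec P (enc (leafpos \<phi> k)) b = vcoef \<phi> s k (\<sigma>f b)" if "k \<in> {1..n}" "b \<in> sp_basis P" for k b
    unfolding vec[OF lkI[OF that(1)] that(2)] \<sigma>f_def using vc_vcoef[OF dist lv r sS[OF that(2)] that(1)] .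
  have tgtf: "sp_target P b = tcoef \<phi> s (\<sigma>f b)" if "b \<in> sp_basis P" for b
    unfolding tgt[OF that] \<sigma>f_def using tc_tcoef[OF dist lv r sS[OF that]] .
  have tnz: "sp_target P b \<noteq> 0" if "b \<in> sp_basis P" for b
  proof -
    have "tc \<phi> s (gates \<phi>) (\<sigma> b) > 0" using tc_pos[OF pos, of "gates \<phi>"] by simp
    then show ?thesis using tgt[OF that] by simp
  qed
  have preim: "\<exists>b\<in>sp_basis P. \<sigma>f b = x" if "x \<in> Uset \<phi> n" for x
    using bijf that unfolding bij_betw_def by (metis imageE)
  have injf: "b = b'" if "b \<in> sp_basis P" "b' \<in> sp_basis P" "\<sigma>f b = \<sigma>f b'" for b b'
    using bijf that unfolding bij_betw_def inj_on_def by blast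
  have vz: "vcoef \<phi> s k x = 0 \<longleftrightarrow> x k" if x: "x \<in> Uset \<phi> n" and k: "k \<in> {1..n}" for x k
  proof
    assume "x k" then show "vcoef \<phi> s k x = 0" unfolding vcoef_def by simp
  next
    assume v0: "vcoef \<phi> s k x = 0"
    obtain b where b: "b \<in> sp_basis P" "\<sigma>f b = x" using preim[OF x] by blast
    show "x k"
    proof (rule ccontr)
      assume nx: "\<not> x k"
      have "\<not> Xf \<phi> n (\<sigma> b) k" using nx b(2) unfolding \<sigma>f_def by simp
      then have "leafpos \<phi> k \<in> \<sigma> b" using k unfolding Xf_def by simp
      moreover have "path (leafpos \<phi> k) \<subseteq> gates \<phi>" using gamma_path[OF dist lv k] unfolding gamma_def by blast
      ultimately have "vc \<phi> s (gates \<phi>) (leafpos \<phi> k) (\<sigma> b) > 0"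
        using vc_pos[OF pos order_refl] lk[OF k] by simp
      moreover have "complex_of_real (vc \<phi> s (gates \<phi>) (leafpos \<phi> k) (\<sigma> b)) = 0"
        using vc_vcoef[OF dist lv r sS[OF b(1)] k] b(2) v0 unfolding \<sigma>f_def by simp
      ultimately show False by simp
    qed
  qed
  have wit: "witness P (\<lambda>p. x (leaflabel \<phi> p)) (\<lambda>b. if \<sigma>f b = x then 1 / cnj (sp_target P b) else 0)"
    if x: "x \<in> Uset \<phi> n" for x
  proof -
    obtain b0 where b0: "b0 \<in> sp_basis P" "\<sigma>f b0 = x" using preim[OF x] by blast
    have "ip P (sp_target P) (\<lambda>b. if \<sigma>f b = x then 1 / cnj (sp_target P b) else 0)
        = (\<Sum>b\<in>sp_basis P. if b = b0 then 1 else 0)"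
      unfolding ip_def
    proof (rule sum.cong)
      fix b assume b: "b \<in> sp_basis P"
      show "cnj (sp_target P b) * (if \<sigma>f b = x then 1 / cnj (sp_target P b) else 0) = (if b = b0 then 1 else 0)"
      proof (cases "b = b0")
        case True then show ?thesis using b0 tnz[OF b] by simp
      next
        case False
        then have "\<sigma>f b \<noteq> x" using injf[OF b b0(1)] b0(2) by metis
        then show ?thesis using False by simp
      qed
    qed simp
    also have "\<dots> = 1" using fin b0(1) by simp
    finally have t1: "ip P (sp_target P) (\<lambda>b. if \<sigma>f b = x then 1 / cnj (sp_target P b) else 0) = 1" .
    have t2: "\<forall>i\<in>sp_idx P p. ip P (sp_vec P i) (\<lambda>b. if \<sigma>f b = x then 1 / cnj (sp_target P b) else 0) = 0"
      if p: "p \<in> sp_inputs P" and xp: "x (leaflabel \<phi> p)" for p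
    proof -
      obtain k where pk: "sub \<phi> p = Some (Leaf k)" using p unfolding inpL leafposs_def by blast
      have kl: "leaflabel \<phi> p = k" unfolding leaflabel_def pk by simp
      have k: "k \<in> {1..n}" using leaf_in_leaves[OF pk] lv by simp
      have pl: "leafpos \<phi> k = p" using leafpos_eq[OF dist pk] .
      show ?thesis
      proof
        fix i assume "i \<in> sp_idx P p"
        then have i: "i = enc (leafpos \<phi> k)" using idx[OF p] pl by simp
        show "ip P (sp_vec P i) (\<lambda>b. if \<sigma>f b = x then 1 / cnj (sp_target P b) else 0) = 0"
          unfolding ip_def
        proof (rule sum.neutral, rule ballI)
          fix b assume b: "b \<in> sp_basis P"
          show "cnj (sp_vec P i b) * (if \<sigma>f b = x then 1 / cnj (sp_target P b) else 0) = 0"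
          proof (cases "\<sigma>f b = x")
            case True
            have "sp_vec P i b = vcoef \<phi> s k x" unfolding i vecf[OF k b] True ..
            also have "\<dots> = 0" using vz[OF x k] xp kl by simp
            finally show ?thesis by simp
          qed simp
        qed
      qed
    qed
    show ?thesis unfolding witness_def using t1 t2 by blast
  qed
  show ?thesis
  proof (intro exI[of _ \<sigma>f] conjI ballI)
    show "bij_betw \<sigma>f (sp_basis P) (Uset \<phi> n)" by (rule bijf)
    show "sp_inputs P = leafposs \<phi>" by (rule inpL)
    fix b assume "b \<in> sp_basis P" then show "sp_target P b = tcoef \<phi> s (\<sigma>f b)" by (rule tgtf)
  next
    fix k assume k: "k \<in> {1..n}"
    show "\<exists>i. sp_idx P (leafpos \<phi> k) = {i} \<and> (\<forall>b\<in>sp_basis P. sp_vec P i b = vcoef \<phi> s k (\<sigma>f b))"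
      using idx[OF lkI[OF k]] vecf[OF k] by blast
  next
    fix x k assume "x \<in> Uset \<phi> n" "k \<in> {1..n}"
    then show "(vcoef \<phi> s k x = 0) = x k" by (rule vz)
  next
    fix x assume "x \<in> Uset \<phi> n"
    then show "witness P (\<lambda>p. x (leaflabel \<phi> p)) (\<lambda>b. if \<sigma>f b = x then 1 / cnj (sp_target P b) else 0)"
      by (rule wit)
  qed
qed


end
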